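(* Let $\mathfrak{g}$ be a finite-dimensional complex two-step nilpotent Lie algebra with $\dim([\mathfrak{g},\mathfrak{g}])\le 2$. Then $\mathfrak{g}$ admits a periodic derivation.
   Context: A derivation $D$ of a Lie algebra is called periodic if there is an integer $m\ge 1$ with $D^m=\mathrm{id}$. *)

theory Defs
  imports Complex_Main
begin

definition lie_algebra :: "(complex \<Rightarrow> 'a::ab_group_add \<Rightarrow> 'a) \<Rightarrow> ('a \<Rightarrow> 'a \<Rightarrow> 'a) \<Rightarrow> bool" where
  "lie_algebra sc br \<longleftrightarrow>
     vector_space sc \<and>
     (\<forall>x. Vector_Spaces.linear sc sc (br x)) \<and>
     (\<forall>y. Vector_Spaces.linear sc sc (\<lambda>x. br x y)) \<and>
     (\<forall>x. br x x = 0) \<and>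
     (\<forall>x y z. br x (br y z) + br y (br z x) + br z (br x y) = 0)"

definition finite_dim_space :: "(complex \<Rightarrow> 'a::ab_group_add \<Rightarrow> 'a) \<Rightarrow> bool" where
  "finite_dim_space sc \<longleftrightarrow> (\<exists>B. finite B \<and> module.span sc B = UNIV)"

definition derived_algebra :: "(complex \<Rightarrow> 'a::ab_group_add \<Rightarrow> 'a) \<Rightarrow> ('a \<Rightarrow> 'a \<Rightarrow> 'a) \<Rightarrow> 'a set" where
  "derived_algebra sc br = module.span sc {br x y | x y. True}"

definition two_step_nilpotent :: "('a::ab_group_add \<Rightarrow> 'a \<Rightarrow> 'a) \<Rightarrow> bool" where
  "two_step_nilpotent br \<longleftrightarrow>
     (\<forall>x y z. br x (br y z) = 0) \<and> (\<exists>x y. br x y \<noteq> 0)"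

definition lie_derivation :: "(complex \<Rightarrow> 'a::ab_group_add \<Rightarrow> 'a) \<Rightarrow> ('a \<Rightarrow> 'a \<Rightarrow> 'a) \<Rightarrow> ('a \<Rightarrow> 'a) \<Rightarrow> bool" where
  "lie_derivation sc br D \<longleftrightarrow>
     Vector_Spaces.linear sc sc D \<and> (\<forall>x y. D (br x y) = br (D x) y + br x (D y))"

definition periodic_derivation :: "(complex \<Rightarrow> 'a::ab_group_add \<Rightarrow> 'a) \<Rightarrow> ('a \<Rightarrow> 'a \<Rightarrow> 'a) \<Rightarrow> ('a \<Rightarrow> 'a) \<Rightarrow> bool" where
  "periodic_derivation sc br D \<longleftrightarrow>
     lie_derivation sc br D \<and> (\<exists>m::nat. m \<ge> 1 \<and> D ^^ m = id)"

end

theory Submission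
  imports Defs
begin

definition iso :: "('a \<Rightarrow> 'a \<Rightarrow> complex) \<Rightarrow> 'a set \<Rightarrow> bool" where
  "iso \<omega> U \<longleftrightarrow> (\<forall>x\<in>U. \<forall>y\<in>U. \<omega> x y = 0)"

definition rad :: "'a set \<Rightarrow> ('a \<Rightarrow> 'a \<Rightarrow> complex) \<Rightarrow> 'a set" where
  "rad W \<omega> = {x\<in>W. \<forall>y\<in>W. \<omega> x y = 0}"

definition pen :: "complex \<Rightarrow> complex \<Rightarrow> ('a \<Rightarrow> 'a \<Rightarrow> complex) \<Rightarrow> ('a \<Rightarrow> 'a \<Rightarrow> complex) \<Rightarrow> 'a \<Rightarrow> 'a \<Rightarrow> complex" where
  "pen a b \<omega>1 \<omega>2 = (\<lambda>x y. a * \<omega>1 x y + b * \<omega>2 x y)"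

locale fcvs = finite_dimensional_vector_space scale Basis
  for scale :: "complex \<Rightarrow> 'a::ab_group_add \<Rightarrow> 'a" (infixr \<open>*s\<close> 75) and Basis
begin

definition skew :: "('a \<Rightarrow> 'a \<Rightarrow> complex) \<Rightarrow> bool" where
  "skew \<omega> \<longleftrightarrow> (\<forall>x y z. \<omega> (x + y) z = \<omega> x z + \<omega> y z) \<and> (\<forall>c x y. \<omega> (c *s x) y = c * \<omega> x y)
     \<and> (\<forall>x y. \<omega> y x = - \<omega> x y)"

definition lin :: "('a \<Rightarrow> complex) \<Rightarrow> bool" where
  "lin f \<longleftrightarrow> (\<forall>x y. f (x + y) = f x + f y) \<and> (\<forall>c x. f (c *s x) = c * f x)"

context fixes \<omega> assumes sk: "skew \<omega>"
begin
lemma sk_add1: "\<omega> (x + y) z = \<omega> x z + \<omega> y z" using sk unfolding skew_def by blast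
lemma sk_scale1: "\<omega> (c *s x) y = c * \<omega> x y" using sk unfolding skew_def by blast
lemma sk_swap: "\<omega> y x = - \<omega> x y" using sk unfolding skew_def by blast
lemma sk_add2: "\<omega> z (x + y) = \<omega> z x + \<omega> z y"
proof -
  have "\<omega> z (x + y) = - \<omega> (x + y) z" by (rule sk_swap)
  also have "\<dots> = - (\<omega> x z + \<omega> y z)" by (simp add: sk_add1)
  finally show ?thesis using sk_swap[of z x] sk_swap[of z y] by simp
qed
lemma sk_scale2: "\<omega> y (c *s x) = c * \<omega> y x"
proof -
  have "\<omega> y (c *s x) = - \<omega> (c *s x) y" by (rule sk_swap)
  also have "\<dots> = - (c * \<omega> x y)" by (simp add: sk_scale1)
  finally show ?thesis using sk_swap[of y x] by simp
qed
lemma sk_zero1[simp]: "\<omega> 0 y = 0"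
  using sk_scale1[of 0 0 y] by simp
lemma sk_zero2[simp]: "\<omega> y 0 = 0"
  using sk_scale2[of y 0 0] by simp
lemma sk_self[simp]: "\<omega> x x = 0"
  using sk_swap[of x x] by simp
lemma sk_neg1: "\<omega> (- x) y = - \<omega> x y"
  using sk_scale1[of "-1" x y] by simp
lemma sk_neg2: "\<omega> y (- x) = - \<omega> y x"
  using sk_scale2[of y "-1" x] by simp
lemma sk_diff1: "\<omega> (x - y) z = \<omega> x z - \<omega> y z"
proof -
  have "\<omega> (x - y) z = \<omega> (x + - y) z" by (simp only: diff_conv_add_uminus)
  also have "\<dots> = \<omega> x z + - \<omega> y z" by (simp only: sk_add1 sk_neg1)
  finally show ?thesis by simp
qed
lemma sk_diff2: "\<omega> z (x - y) = \<omega> z x - \<omega> z y"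
proof -
  have "\<omega> z (x - y) = \<omega> z (x + - y)" by (simp only: diff_conv_add_uminus)
  also have "\<dots> = \<omega> z x + - \<omega> z y" by (simp only: sk_add2 sk_neg2)
  finally show ?thesis by simp
qed
lemma sk_sum1: "\<omega> (\<Sum>i\<in>A. f i) y = (\<Sum>i\<in>A. \<omega> (f i) y)"
  by (induction A rule: infinite_finite_induct) (auto simp: sk_add1)
lemma sk_sum2: "\<omega> y (\<Sum>i\<in>A. f i) = (\<Sum>i\<in>A. \<omega> y (f i))"
  by (induction A rule: infinite_finite_induct) (auto simp: sk_add2)
lemma lin2: "lin (\<omega> x)" unfolding lin_def by (simp add: sk_add2 sk_scale2)
lemma lin1: "lin (\<lambda>y. \<omega> y x)" unfolding lin_def by (simp add: sk_add1 sk_scale1)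
end

lemma skew_pen: assumes s1: "skew \<omega>1" and s2: "skew \<omega>2" shows "skew (pen a b \<omega>1 \<omega>2)"
  unfolding skew_def pen_def
proof (intro conjI allI)
  fix x y z c
  show "a * \<omega>1 (x + y) z + b * \<omega>2 (x + y) z = a * \<omega>1 x z + b * \<omega>2 x z + (a * \<omega>1 y z + b * \<omega>2 y z)"
    by (simp add: sk_add1[OF s1] sk_add1[OF s2] algebra_simps)
  show "a * \<omega>1 (c *s x) y + b * \<omega>2 (c *s x) y = c * (a * \<omega>1 x y + b * \<omega>2 x y)"
    by (simp add: sk_scale1[OF s1] sk_scale1[OF s2] algebra_simps)
  show "a * \<omega>1 y x + b * \<omega>2 y x = - (a * \<omega>1 x y + b * \<omega>2 x y)"
    using sk_swap[OF s1, of y x] sk_swap[OF s2, of y x] by (simp add: algebra_simps)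
qed

end

context fcvs
begin

lemma lin_diff: assumes "lin f" shows "f (x - y) = f x - f y"
proof -
  have "f x = f ((x - y) + y)" by simp
  also have "\<dots> = f (x - y) + f y" using assms unfolding lin_def by blast
  finally show ?thesis by simp
qed

lemma rep_span:
  assumes B: "skew B" and T: "subspace T" and fin: "finite Bs"
  shows "lin f \<Longrightarrow> (\<forall>w\<in>T. (\<forall>s\<in>span Bs. B s w = 0) \<longrightarrow> f w = 0) \<Longrightarrow> \<exists>s\<in>span Bs. \<forall>w\<in>T. f w = B s w"
  using fin
proof (induction Bs arbitrary: f rule: finite_induct)
  case empty
  then show ?case using sk_zero1[OF B] by auto
next
  case (insert b Bs)
  define Z where "Z = {w\<in>T. \<forall>s\<in>span Bs. B s w = 0}"
  have killall: "\<forall>s\<in>span (insert b Bs). B s w = 0" if "w \<in> Z" "B b w = 0" for w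
  proof
    fix s assume "s \<in> span (insert b Bs)"
    then obtain k where k: "s - k *s b \<in> span Bs" using span_breakdown_eq by blast
    have "B s w = B (s - k *s b) w + k * B b w"
      by (simp add: sk_diff1[OF B] sk_scale1[OF B])
    also have "\<dots> = 0" using that k unfolding Z_def by auto
    finally show "B s w = 0" .
  qed
  show ?case
  proof (cases "\<forall>z\<in>Z. B b z = 0")
    case True
    have "\<exists>s\<in>span Bs. \<forall>w\<in>T. f w = B s w"
    proof (rule insert.IH[OF insert.prems(1)], intro ballI impI)
      fix w assume w: "w \<in> T" "\<forall>s\<in>span Bs. B s w = 0"
      then have "w \<in> Z" unfolding Z_def by auto
      then show "f w = 0" using killall True insert.prems(2) w(1) by auto
    qed
    then show ?thesis using span_mono[of Bs "insert b Bs"] by blast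
  next
    case False
    then obtain z where z: "z \<in> Z" "B b z \<noteq> 0" by auto
    have zT: "z \<in> T" using z unfolding Z_def by auto
    define c where "c = f z / B b z"
    define g where "g w = f w - c * B b w" for w
    have lg: "lin g" using insert.prems(1) lin2[OF B, of b] unfolding lin_def g_def
      by (simp add: algebra_simps)
    have "\<exists>s\<in>span Bs. \<forall>w\<in>T. g w = B s w"
    proof (rule insert.IH[OF lg], intro ballI impI)
      fix w assume w: "w \<in> T" "\<forall>s\<in>span Bs. B s w = 0"
      define w' where "w' = w - (B b w / B b z) *s z"
      have w'T: "w' \<in> T" unfolding w'_def using T w zT by (simp add: subspace_diff subspace_scale)
      have "B s w' = 0" if "s \<in> span Bs" for s
        using w that z unfolding w'_def Z_def by (simp add: sk_diff2[OF B] sk_scale2[OF B])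
      then have "w' \<in> Z" using w'T unfolding Z_def by auto
      moreover have "B b w' = 0" unfolding w'_def using z(2) by (simp add: sk_diff2[OF B] sk_scale2[OF B])
      ultimately have "f w' = 0" using killall insert.prems(2) w'T by blast
      moreover have "f w' = f w - (B b w / B b z) * f z"
        using lin_diff[OF insert.prems(1)] insert.prems(1) unfolding w'_def lin_def by simp
      ultimately have "f w = (B b w / B b z) * f z" by simp
      then show "g w = 0" unfolding g_def c_def by simp
    qed
    then obtain s0 where s0: "s0 \<in> span Bs" "\<forall>w\<in>T. g w = B s0 w" by blast
    have "s0 + c *s b \<in> span (insert b Bs)"
      using s0(1) span_mono[of Bs "insert b Bs"]
      by (meson span_add span_scale span_base insertI1 subset_insertI subsetD)
    moreover have "f w = B (s0 + c *s b) w" if "w \<in> T" for w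
      using s0(2) that unfolding g_def by (simp add: sk_add1[OF B] sk_scale1[OF B] algebra_simps)
    ultimately show ?thesis by blast
  qed
qed

lemma rep_subspace:
  assumes B: "skew B" and T: "subspace T" and S: "subspace S" and f: "lin f"
    and h: "\<forall>w\<in>T. (\<forall>s\<in>S. B s w = 0) \<longrightarrow> f w = 0"
  shows "\<exists>s\<in>S. \<forall>w\<in>T. f w = B s w"
proof -
  obtain Bs where Bs: "Bs \<subseteq> S" "independent Bs" "S \<subseteq> span Bs" "card Bs = dim S"
    using basis_exists by blast
  have fin: "finite Bs" using Bs(2) finiteI_independent by blast
  have eq: "span Bs = S" using Bs S by (simp add: span_subspace)
  show ?thesis using rep_span[OF B T fin f] h unfolding eq by blast
qed

end

context fcvs
begin

lemma rad_subspace: assumes W: "subspace W" and s: "skew \<omega>" shows "subspace (rad W \<omega>)"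
  unfolding subspace_def rad_def
  using W by (auto simp: subspace_0 subspace_add subspace_scale sk_add1[OF s] sk_scale1[OF s] sk_zero1[OF s])

lemma rad_sub: "rad W \<omega> \<subseteq> W" unfolding rad_def by auto

lemma complement_exists:
  assumes A: "subspace A" and W: "subspace W" and AW: "A \<subseteq> W"
  obtains M :: "'a set" where "subspace M" "M \<subseteq> W" "A \<inter> M = {0}" "\<forall>w\<in>W. \<exists>a\<in>A. \<exists>m\<in>M. w = a + m"
proof -
  obtain BA where BA: "BA \<subseteq> A" "independent BA" "A \<subseteq> span BA" "card BA = dim A"
    using basis_exists by blast
  obtain B where B: "BA \<subseteq> B" "B \<subseteq> W" "independent B" "W \<subseteq> span B"
    using maximal_independent_subset_extend[of BA W] BA AW by blast
  have finB: "finite B" using B(3) finiteI_independent by blast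
  have spA: "span BA = A" using BA A by (simp add: span_subspace)
  define M where "M = span (B - BA)"
  have "subspace M" unfolding M_def by simp
  moreover have "M \<subseteq> W" unfolding M_def using B(2) W by (meson Diff_subset span_minimal subset_trans)
  moreover have "A \<inter> M = {0}"
  proof (intro equalityI subsetI)
    fix x :: 'a assume x: "x \<in> A \<inter> M"
    have r1: "representation B x = representation BA x"
      using representation_extend[OF B(3), of x BA] x spA B(1) by auto
    have r2: "representation B x = representation (B - BA) x"
      using representation_extend[OF B(3), of x "B - BA"] x M_def by auto
    have z: "representation B x b = 0" for b
    proof (rule ccontr)
      assume "representation B x b \<noteq> 0"
      then have "b \<in> BA" "b \<in> B - BA"
        using representation_ne_zero r1 r2 by metis+
      then show False by auto
    qed
    have "x \<in> span B" using x B(1) spA span_mono[of BA B] by auto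
    then have "x = (\<Sum>b\<in>B. representation B x b *s b)"
      using sum_representation_eq[OF B(3) _ finB] by auto
    then show "x \<in> {0}" using z by simp
  next
    fix x :: 'a assume "x \<in> {0}" then show "x \<in> A \<inter> M"
      using A M_def by (simp add: subspace_0 span_zero)
  qed
  moreover have "\<forall>w\<in>W. \<exists>a\<in>A. \<exists>m\<in>M. w = a + m"
  proof
    fix w assume "w \<in> W"
    then have "w \<in> span (BA \<union> (B - BA))" using B by (metis Un_Diff_cancel sup.absorb2 subsetD)
    then show "\<exists>a\<in>A. \<exists>m\<in>M. w = a + m" unfolding span_Un M_def spA by blast
  qed
  ultimately show ?thesis using that by blast
qed

lemma codim1:
  assumes A: "subspace A" and g: "lin g"
  shows "dim A \<le> Suc (dim {a\<in>A. g a = 0})"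
proof (cases "\<forall>a\<in>A. g a = 0")
  case True
  then have "{a\<in>A. g a = 0} = A" by auto
  then show ?thesis by simp
next
  case False
  then obtain a0 where a0: "a0 \<in> A" "g a0 \<noteq> 0" by auto
  define A0 where "A0 = {a\<in>A. g a = 0}"
  have "A \<subseteq> span (insert a0 A0)"
  proof
    fix a assume a: "a \<in> A"
    define k where "k = g a / g a0"
    have "a - k *s a0 \<in> A0"
      unfolding A0_def using a a0 A g
      by (simp add: subspace_diff subspace_scale lin_diff[OF g] k_def) (simp add: lin_def)
    then show "a \<in> span (insert a0 A0)"
      using span_breakdown_eq[of a a0 A0] span_base by blast
  qed
  then have "dim A \<le> dim (insert a0 A0)" by (rule subset_le_dim)
  also have "\<dots> \<le> Suc (dim A0)" by (simp add: dim_insert)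
  finally show ?thesis unfolding A0_def .
qed

lemma dim_insert_sub:
  assumes "subspace S" "x \<notin> S"
  shows "dim (insert x S) = Suc (dim S)"
proof -
  have "span S = S" using assms(1) span_eq_iff by blast
  then have "x \<notin> span S" using assms(2) by blast
  then show ?thesis using dim_insert[of x S] by simp
qed

lemma dim_lt_sub:
  assumes "subspace H" "subspace W" "H \<subseteq> W" "x \<in> W" "x \<notin> H"
  shows "dim H < dim W"
proof -
  have "span H = H" "span W = W" using assms(1,2) span_eq_iff by blast+
  moreover have "H \<subset> W" using assms by auto
  ultimately have "span H \<subset> span W" by metis
  then show ?thesis by (rule dim_psubset)
qed

lemma subspace_pairsum: "subspace A \<Longrightarrow> subspace B \<Longrightarrow> subspace {a + b |a b. a \<in> A \<and> b \<in> B}"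
  by (rule subspace_sums)

end

definition (in module) lin_indep_on :: "('i \<Rightarrow> 'b) \<Rightarrow> 'i set \<Rightarrow> bool" where
  "lin_indep_on v T \<longleftrightarrow> (\<forall>c. (\<Sum>t\<in>T. c t *s v t) = 0 \<longrightarrow> (\<forall>t\<in>T. c t = 0))"

context fcvs
begin

lemma idx_inj:
  assumes "lin_indep_on v T" "finite T"
  shows "inj_on v T"
proof (rule inj_onI, rule ccontr)
  fix x y assume xy: "x \<in> T" "y \<in> T" "v x = v y" "x \<noteq> y"
  define c where "c t = (if t = x then 1 else if t = y then -1 else (0::complex))" for t
  have "(\<Sum>t\<in>T. c t *s v t) = (\<Sum>t\<in>{x,y}. c t *s v t)"
    using assms(2) xy by (intro sum.mono_neutral_right) (auto simp: c_def)
  also have "\<dots> = 0" using xy by (simp add: c_def)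
  finally have "c x = 0" using assms(1) xy unfolding lin_indep_on_def by blast
  then show False by (simp add: c_def)
qed

lemma idx_card:
  assumes fin: "finite T" and li: "lin_indep_on v T" and vM: "\<forall>t\<in>T. v t \<in> M"
  shows "card T \<le> dim M"
proof -
  have inj: "inj_on v T" using idx_inj li fin by blast
  have "independent (v ` T)"
    unfolding independent_explicit
  proof (intro conjI allI impI ballI)
    show "finite (v ` T)" using fin by simp
    fix c x assume s: "(\<Sum>x\<in>v ` T. c x *s x) = 0" and x: "x \<in> v ` T"
    have "(\<Sum>t\<in>T. c (v t) *s v t) = 0" using s sum.reindex[OF inj, of "\<lambda>x. c x *s x"] by simp
    then have "\<forall>t\<in>T. c (v t) = 0"
      using spec[OF li[unfolded lin_indep_on_def], of "\<lambda>t. c (v t)"] by simp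
    then show "c x = 0" using x by auto
  qed
  then have "card (v ` T) \<le> dim M" using vM by (intro independent_card_le_dim) auto
  then show ?thesis using card_image[OF inj] by simp
qed

lemma bad_indep:
  assumes s1: "skew \<omega>1" and s2: "skew \<omega>2" and M: "subspace M" and nd: "rad M \<omega>1 = {0}"
  shows "finite T \<Longrightarrow> (\<forall>t\<in>T. v t \<in> M \<and> v t \<noteq> 0 \<and> (\<forall>m\<in>M. \<omega>1 (v t) m + t * \<omega>2 (v t) m = 0))
     \<Longrightarrow> lin_indep_on v T"
proof (induction T rule: finite_induct)
  case empty
  then show ?case unfolding lin_indep_on_def by simp
next
  case (insert t0 T)
  have IH: "lin_indep_on v T" using insert by auto
  have vM: "v t \<in> M" and vnz: "v t \<noteq> 0" and ker: "\<forall>m\<in>M. \<omega>1 (v t) m + t * \<omega>2 (v t) m = 0"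
    if "t \<in> insert t0 T" for t using insert.prems that by auto
  have tnz: "t \<noteq> 0" if "t \<in> insert t0 T" for t
  proof
    assume "t = 0"
    then have "v t \<in> rad M \<omega>1" using vM[OF that] ker[OF that] unfolding rad_def by auto
    then show False using nd vnz[OF that] by auto
  qed
  show ?case unfolding lin_indep_on_def
  proof (intro allI impI)
    fix c assume sum0: "(\<Sum>t\<in>insert t0 T. c t *s v t) = 0"
    define e where "e t = c t * (t - t0) / t" for t
    have F: "(\<Sum>t\<in>T. e t * \<omega>1 (v t) m) = 0" if m: "m \<in> M" for m
    proof -
      have A: "(\<Sum>t\<in>insert t0 T. c t * \<omega>1 (v t) m) = 0"
        using sk_sum1[OF s1, of "\<lambda>t. c t *s v t" "insert t0 T" m] sum0 by (simp add: sk_scale1[OF s1] sk_zero1[OF s1])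
      have B: "(\<Sum>t\<in>insert t0 T. c t * \<omega>2 (v t) m) = 0"
        using sk_sum1[OF s2, of "\<lambda>t. c t *s v t" "insert t0 T" m] sum0 by (simp add: sk_scale1[OF s2] sk_zero1[OF s2])
      have "(\<Sum>t\<in>insert t0 T. c t * \<omega>1 (v t) m) = (\<Sum>t\<in>insert t0 T. - (c t * t * \<omega>2 (v t) m))"
      proof (rule sum.cong[OF refl])
        fix t assume t: "t \<in> insert t0 T"
        have "\<omega>1 (v t) m = - (t * \<omega>2 (v t) m)" using ker[OF t] m by (simp add: eq_neg_iff_add_eq_0)
        then show "c t * \<omega>1 (v t) m = - (c t * t * \<omega>2 (v t) m)" by simp
      qed
      then have A': "(\<Sum>t\<in>insert t0 T. c t * t * \<omega>2 (v t) m) = 0" using A by (simp add: sum_negf)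
      have "(\<Sum>t\<in>insert t0 T. c t * (t - t0) * \<omega>2 (v t) m)
          = (\<Sum>t\<in>insert t0 T. c t * t * \<omega>2 (v t) m - t0 * (c t * \<omega>2 (v t) m))"
        by (rule sum.cong[OF refl]) (simp add: algebra_simps)
      also have "\<dots> = (\<Sum>t\<in>insert t0 T. c t * t * \<omega>2 (v t) m) - (\<Sum>t\<in>insert t0 T. t0 * (c t * \<omega>2 (v t) m))"
        by (rule sum_subtractf)
      also have "(\<Sum>t\<in>insert t0 T. t0 * (c t * \<omega>2 (v t) m)) = t0 * (\<Sum>t\<in>insert t0 T. c t * \<omega>2 (v t) m)"
        by (rule sum_distrib_left[symmetric])
      also have "(\<Sum>t\<in>insert t0 T. c t * t * \<omega>2 (v t) m) - t0 * (\<Sum>t\<in>insert t0 T. c t * \<omega>2 (v t) m) = 0"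
        using A' B by simp
      finally have D: "(\<Sum>t\<in>insert t0 T. c t * (t - t0) * \<omega>2 (v t) m) = 0" .
      then have E: "(\<Sum>t\<in>T. c t * (t - t0) * \<omega>2 (v t) m) = 0" using insert.hyps by simp
      have "(\<Sum>t\<in>T. e t * \<omega>1 (v t) m) = (\<Sum>t\<in>T. - (c t * (t - t0) * \<omega>2 (v t) m))"
      proof (rule sum.cong[OF refl])
        fix t assume t: "t \<in> T"
        have "\<omega>1 (v t) m = - (t * \<omega>2 (v t) m)" using ker[of t] t m by (simp add: eq_neg_iff_add_eq_0)
        then show "e t * \<omega>1 (v t) m = - (c t * (t - t0) * \<omega>2 (v t) m)"
          using tnz[of t] t unfolding e_def by (simp add: field_simps)
      qed
      also have "\<dots> = 0" using E by (simp add: sum_negf)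
      finally show ?thesis .
    qed
    have inM: "(\<Sum>t\<in>T. e t *s v t) \<in> M"
      using vM M by (auto intro!: subspace_sum subspace_scale)
    have "(\<Sum>t\<in>T. e t *s v t) \<in> rad M \<omega>1"
      unfolding rad_def using inM F by (simp add: sk_sum1[OF s1] sk_scale1[OF s1])
    then have "(\<Sum>t\<in>T. e t *s v t) = 0" using nd by auto
    then have e0: "\<forall>t\<in>T. e t = 0" using IH unfolding lin_indep_on_def by blast
    have cT: "\<forall>t\<in>T. c t = 0"
    proof
      fix t assume t: "t \<in> T"
      then have "t \<noteq> t0" "t \<noteq> 0" using insert.hyps tnz by auto
      then show "c t = 0" using e0 t unfolding e_def by auto
    qed
    then have "c t0 *s v t0 = 0" using sum0 insert.hyps by simp
    then have "c t0 = 0" using vnz[of t0] by simp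
    then show "\<forall>t\<in>insert t0 T. c t = 0" using cT by simp
  qed
qed

lemma bad_finite:
  assumes s1: "skew \<omega>1" and s2: "skew \<omega>2" and M: "subspace M" and nd: "rad M \<omega>1 = {0}"
  shows "finite {t. \<exists>v\<in>M. v \<noteq> 0 \<and> (\<forall>m\<in>M. \<omega>1 v m + t * \<omega>2 v m = 0)}" (is "finite ?B")
proof (rule ccontr)
  assume inf: "infinite ?B"
  obtain T where T: "finite T" "card T = Suc (dim M)" "T \<subseteq> ?B"
    using infinite_arbitrarily_large[OF inf, of "Suc (dim M)"] by blast
  define P where "P t v \<longleftrightarrow> v\<in>M \<and> v \<noteq> 0 \<and> (\<forall>m\<in>M. \<omega>1 v m + t * \<omega>2 v m = 0)" for t v
  define v where "v t = (SOME v. P t v)" for t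
  have Pv: "P t (v t)" if "t \<in> T" for t
  proof -
    have "\<exists>v. P t v" using that T(3) unfolding P_def by blast
    then show ?thesis unfolding v_def by (rule someI_ex)
  qed
  have all: "\<forall>t\<in>T. v t \<in> M \<and> v t \<noteq> 0 \<and> (\<forall>m\<in>M. \<omega>1 (v t) m + t * \<omega>2 (v t) m = 0)"
    using Pv unfolding P_def by blast
  have li: "lin_indep_on v T" by (rule bad_indep[OF s1 s2 M nd T(1) all])
  have "card T \<le> dim M" by (rule idx_card[OF T(1) li]) (use all in blast)
  then show False using T(2) by simp
qed

lemma semicont:
  assumes s1: "skew \<omega>1" and s2: "skew \<omega>2" and H: "subspace H"
  shows "\<exists>t. t \<noteq> 0 \<and> dim (rad H (pen 1 t \<omega>1 \<omega>2)) \<le> dim (rad H \<omega>1)"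
proof -
  define K where "K = rad H \<omega>1"
  have K: "subspace K" "K \<subseteq> H" unfolding K_def using rad_subspace[OF H s1] rad_sub[of H \<omega>1] by auto
  obtain M where M: "subspace M" "M \<subseteq> H" "K \<inter> M = {0}" "\<forall>w\<in>H. \<exists>a\<in>K. \<exists>m\<in>M. w = a + m"
    using complement_exists[OF K(1) H K(2)] by blast
  have ndM: "rad M \<omega>1 = {0}"
  proof (intro equalityI subsetI)
    fix m assume m: "m \<in> rad M \<omega>1"
    have "m \<in> K"
      unfolding K_def rad_def
    proof (intro CollectI conjI ballI)
      have "m \<in> M" using m unfolding rad_def by blast
      then show "m \<in> H" using M(2) by blast
      fix h assume "h \<in> H"
      then obtain a m' where am: "a \<in> K" "m' \<in> M" "h = a + m'" using M(4) by blast
      have "\<omega>1 m a = - \<omega>1 a m" by (rule sk_swap[OF s1])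
      also have "\<omega>1 a m = 0" using am(1) \<open>m \<in> H\<close> unfolding K_def rad_def by auto
      finally have "\<omega>1 m a = 0" by simp
      moreover have "\<omega>1 m m' = 0" using m am(2) unfolding rad_def by auto
      ultimately show "\<omega>1 m h = 0" using am(3) by (simp add: sk_add2[OF s1])
    qed
    moreover have "m \<in> M" using m unfolding rad_def by blast
    ultimately show "m \<in> {0}" using M(3) by blast
  next
    fix m :: 'a assume "m \<in> {0}" then show "m \<in> rad M \<omega>1"
      using M(1) unfolding rad_def by (simp add: subspace_0 sk_zero1[OF s1])
  qed
  define Bad where "Bad = {t. \<exists>v\<in>M. v \<noteq> 0 \<and> (\<forall>m\<in>M. \<omega>1 v m + t * \<omega>2 v m = 0)}"
  have fin: "finite (Bad \<union> {0})"
    using bad_finite[OF s1 s2 M(1) ndM] unfolding Bad_def by simp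
  from ex_new_if_finite[OF infinite_UNIV_char_0[where 'a=complex] fin]
  obtain t where t: "t \<notin> Bad \<union> {0}" by (rule exE)
  define R where "R = rad H (pen 1 t \<omega>1 \<omega>2)"
  have R: "subspace R" "R \<subseteq> H" unfolding R_def using rad_subspace[OF H skew_pen[OF s1 s2]] rad_sub[of H] by auto
  have RM: "R \<inter> M = {0}"
  proof (intro equalityI subsetI)
    fix v assume v: "v \<in> R \<inter> M"
    then have "\<forall>m\<in>M. \<omega>1 v m + t * \<omega>2 v m = 0" using M(2) unfolding R_def rad_def pen_def by auto
    then have "v = 0 \<or> t \<in> Bad" using v unfolding Bad_def by blast
    then show "v \<in> {0}" using t by blast
  next
    fix v :: 'a assume "v \<in> {0}" then show "v \<in> R \<inter> M" using R M by (simp add: subspace_0)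
  qed
  have d1: "dim {x + y |x y. x \<in> R \<and> y \<in> M} + dim (R \<inter> M) = dim R + dim M"
    using dim_sums_Int[OF R(1) M(1)] .
  have d2: "dim {x + y |x y. x \<in> K \<and> y \<in> M} + dim (K \<inter> M) = dim K + dim M"
    using dim_sums_Int[OF K(1) M(1)] .
  have "{x + y |x y. x \<in> K \<and> y \<in> M} = H"
  proof (intro equalityI subsetI)
    fix z assume "z \<in> {x + y |x y. x \<in> K \<and> y \<in> M}"
    then obtain x y where "z = x + y" "x \<in> K" "y \<in> M" by blast
    then show "z \<in> H" using K(2) M(2) H subspace_add by blast
  next
    fix z assume "z \<in> H"
    then obtain x y where "x \<in> K" "y \<in> M" "z = x + y" using M(4) by blast
    then show "z \<in> {x + y |x y. x \<in> K \<and> y \<in> M}" by blast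
  qed
  moreover have "{x + y |x y. x \<in> R \<and> y \<in> M} \<subseteq> H"
  proof
    fix z assume "z \<in> {x + y |x y. x \<in> R \<and> y \<in> M}"
    then obtain x y where "z = x + y" "x \<in> R" "y \<in> M" by blast
    then show "z \<in> H" using R(2) M(2) H subspace_add by blast
  qed
  ultimately have "dim R + dim M \<le> dim K + dim M"
    using d1 d2 RM M(3) dim_subset[of "{x + y |x y. x \<in> R \<and> y \<in> M}" H] by simp
  then have "dim R \<le> dim K" by simp
  moreover have "t \<noteq> 0" using t by blast
  ultimately show ?thesis unfolding R_def K_def by blast
qed

end

lemma tri_lemma:
  fixes M :: "nat \<Rightarrow> nat \<Rightarrow> complex" and c :: "nat \<Rightarrow> complex"
  assumes low: "\<And>i j. i + j < d - 1 \<Longrightarrow> M i j = 0"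
    and diag: "\<And>i. i < d \<Longrightarrow> M i (d - 1 - i) \<noteq> 0"
    and eqs: "\<And>i. i < d \<Longrightarrow> (\<Sum>j<d. c j * M i j) = 0"
  shows "\<forall>j<d. c j = 0"
proof -
  have "\<forall>j. d - k \<le> j \<longrightarrow> j < d \<longrightarrow> c j = 0" if "k \<le> d" for k
    using that
  proof (induction k)
    case 0
    then show ?case by auto
  next
    case (Suc k)
    then have IH: "\<forall>j. d - k \<le> j \<longrightarrow> j < d \<longrightarrow> c j = 0" by auto
    define j0 where "j0 = d - Suc k"
    have j0d: "j0 < d" "k < d" using Suc.prems j0_def by auto
    have "(\<Sum>j<d. c j * M k j) = c j0 * M k j0 + (\<Sum>j\<in>{..<d} - {j0}. c j * M k j)"
      using j0d by (simp add: sum.remove)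
    also have "(\<Sum>j\<in>{..<d} - {j0}. c j * M k j) = 0"
    proof (rule sum.neutral, rule ballI)
      fix j assume j: "j \<in> {..<d} - {j0}"
      show "c j * M k j = 0"
      proof (cases "j < j0")
        case True
        then have "k + j < d - 1" using j0_def Suc.prems by auto
        then show ?thesis using low by simp
      next
        case False
        then have "d - k \<le> j" "j < d" using j j0_def by auto
        then show ?thesis using IH by simp
      qed
    qed
    finally have "c j0 * M k j0 = 0" using eqs[OF j0d(2)] by simp
    moreover have "d - Suc k = d - 1 - k" by arith
    then have "M k j0 \<noteq> 0" using diag[OF j0d(2)] j0_def by simp
    ultimately have cj0: "c j0 = 0" by simp
    show ?case
    proof (intro allI impI)
      fix j assume j: "d - Suc k \<le> j" "j < d"
      show "c j = 0"
      proof (cases "j = j0")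
        case True then show ?thesis using cj0 by simp
      next
        case False
        then have "d - k \<le> j" using j j0_def by arith
        then show ?thesis using IH j by simp
      qed
    qed
  qed
  from this[of d] show ?thesis by auto
qed

context fcvs
begin

definition splits :: "'a set \<Rightarrow> 'a set \<Rightarrow> 'a set \<Rightarrow> ('a \<Rightarrow> 'a \<Rightarrow> complex) \<Rightarrow> ('a \<Rightarrow> 'a \<Rightarrow> complex) \<Rightarrow> bool" where
  "splits W U U' \<omega>1 \<omega>2 \<longleftrightarrow> subspace U \<and> subspace U' \<and> U \<subseteq> W \<and> U' \<subseteq> W \<and> U \<inter> U' = {0}
     \<and> (\<forall>w\<in>W. \<exists>u\<in>U. \<exists>u'\<in>U'. w = u + u') \<and> iso \<omega>1 U \<and> iso \<omega>2 U \<and> iso \<omega>1 U' \<and> iso \<omega>2 U'"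

lemma span_idx:
  assumes "x \<in> span (f ` A)" "finite A"
  shows "\<exists>c. x = (\<Sum>i\<in>A. c i *s f i)"
proof -
  let ?T = "{x. \<exists>c. x = (\<Sum>i\<in>A. c i *s f i)}"
  have "subspace ?T"
    unfolding subspace_def
  proof (intro conjI ballI allI)
    show "0 \<in> ?T" by (rule CollectI, rule exI[of _ "\<lambda>_. 0"]) simp
    fix x y assume "x \<in> ?T" "y \<in> ?T"
    then obtain c1 c2 where "x = (\<Sum>i\<in>A. c1 i *s f i)" "y = (\<Sum>i\<in>A. c2 i *s f i)" by blast
    then have "x + y = (\<Sum>i\<in>A. (c1 i + c2 i) *s f i)" by (simp add: sum.distrib scale_left_distrib)
    then show "x + y \<in> ?T" by (intro CollectI exI[of _ "\<lambda>i. c1 i + c2 i"])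
  next
    fix c x assume "x \<in> ?T"
    then obtain c1 where "x = (\<Sum>i\<in>A. c1 i *s f i)" by blast
    then have "c *s x = (\<Sum>i\<in>A. (c * c1 i) *s f i)" by (simp add: scale_sum_right)
    then show "c *s x \<in> ?T" by (intro CollectI exI[of _ "\<lambda>i. c * c1 i"])
  qed
  moreover have "f ` A \<subseteq> ?T"
  proof
    fix x assume "x \<in> f ` A"
    then obtain k where k: "k \<in> A" "x = f k" by blast
    have "(\<Sum>i\<in>A. (if i = k then 1 else 0) *s f i) = f k"
      using assms(2) k(1) by (simp add: if_distrib[where f="\<lambda>c. c *s _"] sum.delta cong: if_cong)
    then show "x \<in> ?T" using k by (intro CollectI exI[of _ "\<lambda>i. if i = k then 1 else 0"]) simp
  qed
  ultimately have "span (f ` A) \<subseteq> ?T" by (rule span_minimal[rotated])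
  then show ?thesis using assms(1) by blast
qed

lemma idx_in_span: "(\<Sum>i\<in>A. c i *s f i) \<in> span (f ` A)"
  by (intro span_sum span_scale span_base) auto

lemma not_in_span_last:
  assumes "lin_indep_on f {..<Suc k}"
  shows "f k \<notin> span (f ` {..<k})"
proof
  assume "f k \<in> span (f ` {..<k})"
  then obtain c where c: "f k = (\<Sum>i<k. c i *s f i)" using span_idx by blast
  define c' where "c' i = (if i = k then -1 else c i)" for i
  have "(\<Sum>i<Suc k. c' i *s f i) = (\<Sum>i<k. c i *s f i) - f k"
    by (simp add: c'_def)
  also have "\<dots> = 0" using c by simp
  finally have "c' k = 0" using assms unfolding lin_indep_on_def by blast
  then show False by (simp add: c'_def)
qed

lemma ext_indep:
  assumes li: "lin_indep_on f {..<k}" and nk: "f k \<notin> span (f ` {..<k})"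
  shows "lin_indep_on f {..<Suc k}"
  unfolding lin_indep_on_def
proof (intro allI impI)
  fix c assume s: "(\<Sum>i<Suc k. c i *s f i) = 0"
  have ck: "c k = 0"
  proof (rule ccontr)
    assume ck: "c k \<noteq> 0"
    from s have e: "c k *s f k = - (\<Sum>i<k. c i *s f i)" by (simp add: add_eq_0_iff2 add.commute)
    have "- (\<Sum>i<k. c i *s f i) \<in> span (f ` {..<k})" by (intro span_neg idx_in_span)
    then have "(1 / c k) *s (c k *s f k) \<in> span (f ` {..<k})" unfolding e by (rule span_scale)
    then show False using nk ck by simp
  qed
  then have "(\<Sum>i<k. c i *s f i) = 0" using s by simp
  then have "\<forall>i<k. c i = 0" using li unfolding lin_indep_on_def by blast
  then show "\<forall>i\<in>{..<Suc k}. c i = 0" using ck by (auto simp: less_Suc_eq)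
qed

lemma iso_span:
  assumes s: "skew \<omega>" and g: "\<forall>x\<in>G. \<forall>y\<in>G. \<omega> x y = 0"
  shows "iso \<omega> (span G)"
proof -
  have 1: "\<forall>y\<in>span G. \<omega> x y = 0" if x: "x \<in> G" for x
  proof
    fix y assume "y \<in> span G"
    then show "\<omega> x y = 0"
    proof (induction rule: span_induct)
      case base then show ?case unfolding subspace_def
        by (simp add: sk_add2[OF s] sk_scale2[OF s] sk_zero2[OF s])
    next
      case (step y) then show ?case using g x by auto
    qed
  qed
  have "\<forall>y\<in>span G. \<omega> x y = 0" if x: "x \<in> span G" for x
    using x
  proof (induction rule: span_induct)
    case base then show ?case unfolding subspace_def
      by (simp add: sk_add1[OF s] sk_scale1[OF s] sk_zero1[OF s])
  next
    case (step x) then show ?case using 1 by auto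
  qed
  then show ?thesis unfolding iso_def by blast
qed

lemma iso_sums:
  assumes s: "skew \<omega>" and A: "iso \<omega> A" and B: "iso \<omega> B" and AB: "\<forall>a\<in>A. \<forall>b\<in>B. \<omega> a b = 0"
  shows "iso \<omega> {a + b |a b. a \<in> A \<and> b \<in> B}"
  unfolding iso_def
proof (intro ballI)
  fix x y assume "x \<in> {a + b |a b. a \<in> A \<and> b \<in> B}" "y \<in> {a + b |a b. a \<in> A \<and> b \<in> B}"
  then obtain a1 b1 a2 b2 where ab: "x = a1 + b1" "y = a2 + b2" "a1 \<in> A" "b1 \<in> B" "a2 \<in> A" "b2 \<in> B"
    by blast
  have "\<omega> b1 a2 = - \<omega> a2 b1" by (rule sk_swap[OF s])
  then have "\<omega> b1 a2 = 0" using AB ab by simp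
  moreover have "\<omega> a1 a2 = 0" "\<omega> a1 b2 = 0" "\<omega> b1 b2 = 0"
    using A B AB ab unfolding iso_def by auto
  ultimately show "\<omega> x y = 0" using ab(1,2) by (simp add: sk_add1[OF s] sk_add2[OF s])
qed

lemma op_exists:
  assumes s1: "skew \<omega>1" and s2: "skew \<omega>2" and W: "subspace W" and nd: "rad W \<omega>1 = {0}"
  shows "\<exists>S. (\<forall>x. S x \<in> W) \<and> (\<forall>x. \<forall>w\<in>W. \<omega>2 x w = \<omega>1 (S x) w)
     \<and> (\<forall>x y. S (x + y) = S x + S y) \<and> (\<forall>c x. S (c *s x) = c *s S x)"
proof -
  have ex: "\<exists>s\<in>W. \<forall>w\<in>W. \<omega>2 x w = \<omega>1 s w" for x
  proof (rule rep_subspace[OF s1 W W lin2[OF s2]], intro ballI impI)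
    fix w assume w: "w \<in> W" "\<forall>s\<in>W. \<omega>1 s w = 0"
    have "w \<in> rad W \<omega>1" unfolding rad_def using w sk_swap[OF s1, of _ w] by auto
    then show "\<omega>2 x w = 0" using nd by (simp add: sk_zero2[OF s2])
  qed
  define S where "S x = (SOME s. s\<in>W \<and> (\<forall>w\<in>W. \<omega>2 x w = \<omega>1 s w))" for x
  have S: "S x \<in> W \<and> (\<forall>w\<in>W. \<omega>2 x w = \<omega>1 (S x) w)" for x
    unfolding S_def using someI_ex[OF ex[of x, unfolded Bex_def]] .
  have uniq: "a = b" if "a \<in> W" "b \<in> W" "\<forall>w\<in>W. \<omega>1 a w = \<omega>1 b w" for a b
  proof -
    have "a - b \<in> rad W \<omega>1" unfolding rad_def using that W
      by (simp add: subspace_diff sk_diff1[OF s1])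
    then show ?thesis using nd by simp
  qed
  have add: "S (x + y) = S x + S y" for x y
  proof (rule uniq)
    show "S (x + y) \<in> W" "S x + S y \<in> W" using S W by (auto intro: subspace_add)
    show "\<forall>w\<in>W. \<omega>1 (S (x + y)) w = \<omega>1 (S x + S y) w"
    proof
      fix w assume w: "w \<in> W"
      have "\<omega>1 (S (x + y)) w = \<omega>2 (x + y) w" using S w by simp
      also have "\<dots> = \<omega>2 x w + \<omega>2 y w" by (rule sk_add1[OF s2])
      also have "\<dots> = \<omega>1 (S x) w + \<omega>1 (S y) w" using S w by simp
      also have "\<dots> = \<omega>1 (S x + S y) w" by (rule sk_add1[OF s1, symmetric])
      finally show "\<omega>1 (S (x + y)) w = \<omega>1 (S x + S y) w" .
    qed
  qed
  have sc: "S (c *s x) = c *s S x" for c x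
  proof (rule uniq)
    show "S (c *s x) \<in> W" "c *s S x \<in> W" using S W by (auto intro: subspace_scale)
    show "\<forall>w\<in>W. \<omega>1 (S (c *s x)) w = \<omega>1 (c *s S x) w"
    proof
      fix w assume w: "w \<in> W"
      have "\<omega>1 (S (c *s x)) w = \<omega>2 (c *s x) w" using S w by simp
      also have "\<dots> = c * \<omega>2 x w" by (rule sk_scale1[OF s2])
      also have "\<dots> = c * \<omega>1 (S x) w" using S w by simp
      also have "\<dots> = \<omega>1 (c *s S x) w" by (rule sk_scale1[OF s1, symmetric])
      finally show "\<omega>1 (S (c *s x)) w = \<omega>1 (c *s S x) w" .
    qed
  qed
  show ?thesis using S add sc by blast
qed

end

locale cyc = fcvs scale Basis
  for scale :: "complex \<Rightarrow> 'a::ab_group_add \<Rightarrow> 'a" (infixr \<open>*s\<close> 75) and Basis +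
  fixes \<omega>1 \<omega>2 :: "'a \<Rightarrow> 'a \<Rightarrow> complex" and W :: "'a set" and S :: "'a \<Rightarrow> 'a"
  assumes s1: "skew \<omega>1" and s2: "skew \<omega>2" and W: "subspace W" and nd: "rad W \<omega>1 = {0}"
    and SW: "\<And>x. S x \<in> W" and Srep: "\<And>x w. w \<in> W \<Longrightarrow> \<omega>2 x w = \<omega>1 (S x) w"
    and Sadd: "\<And>x y. S (x + y) = S x + S y" and Ssc: "\<And>c x. S (c *s x) = c *s S x"
begin

lemma S0: "S 0 = 0"
  using Sadd[of 0 0] by simp

lemma Spow_W: "x \<in> W \<Longrightarrow> (S^^i) x \<in> W"
  by (induction i) (auto simp: SW)

lemma Spow_add: "(S^^i) (x + y) = (S^^i) x + (S^^i) y"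
  by (induction i) (auto simp: Sadd)

lemma Spow_sc: "(S^^i) (c *s x) = c *s (S^^i) x"
  by (induction i) (auto simp: Ssc)

lemma S_selfadj: assumes "x \<in> W" "y \<in> W" shows "\<omega>1 (S x) y = \<omega>1 x (S y)"
proof -
  have "\<omega>1 (S x) y = \<omega>2 x y" using Srep assms by simp
  also have "\<dots> = - \<omega>2 y x" by (rule sk_swap[OF s2])
  also have "\<omega>2 y x = \<omega>1 (S y) x" using Srep assms by simp
  also have "\<omega>1 (S y) x = - \<omega>1 x (S y)" by (rule sk_swap[OF s1])
  finally show ?thesis by simp
qed

lemma Spow_selfadj: assumes "x \<in> W" "y \<in> W" shows "\<omega>1 ((S^^i) x) y = \<omega>1 x ((S^^i) y)"
  using assms
proof (induction i arbitrary: y)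
  case 0 then show ?case by simp
next
  case (Suc i)
  have "\<omega>1 ((S^^Suc i) x) y = \<omega>1 (S ((S^^i) x)) y" by simp
  also have "\<dots> = \<omega>1 ((S^^i) x) (S y)" using S_selfadj Spow_W Suc.prems by blast
  also have "\<dots> = \<omega>1 x ((S^^i) (S y))" using Suc SW by blast
  also have "(S^^i) (S y) = (S^^Suc i) y" by (simp add: funpow_swap1)
  finally show ?case .
qed

lemma Spow_comp: "(S^^i) ((S^^j) x) = (S^^(i + j)) x"
  by (simp add: funpow_add)

abbreviation Cy :: "'a \<Rightarrow> nat \<Rightarrow> 'a set" where
  "Cy u d \<equiv> span ((\<lambda>i. (S^^i) u) ` {..<d})"

lemma Cy_W: "u \<in> W \<Longrightarrow> Cy u d \<subseteq> W"
  using Spow_W W by (intro span_minimal) auto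

lemma Cy_inv:
  assumes u: "u \<in> W" and cl: "(S^^d) u \<in> Cy u d" and x: "x \<in> Cy u d"
  shows "S x \<in> Cy u d"
  using x
proof (induction rule: span_induct)
  case base
  show ?case unfolding subspace_def
    by (simp add: S0 Sadd Ssc span_zero span_add span_scale)
next
  case (step x)
  then obtain i where i: "i < d" "x = (S^^i) u" by blast
  have "S x = (S^^Suc i) u" using i by simp
  moreover have "(S^^Suc i) u \<in> Cy u d"
  proof (cases "Suc i < d")
    case True
    then have "(S^^Suc i) u \<in> (\<lambda>i. (S^^i) u) ` {..<d}" by blast
    then show ?thesis by (rule span_base)
  next
    case False then have "Suc i = d" using i by simp
    then show ?thesis using cl by simp
  qed
  ultimately show ?case by simp
qed

lemma Cy_iso1: assumes u: "u \<in> W" shows "iso \<omega>1 (Cy u d)"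
proof (rule iso_span[OF s1], intro ballI)
  fix x y assume "x \<in> (\<lambda>i. (S^^i) u) ` {..<d}" "y \<in> (\<lambda>i. (S^^i) u) ` {..<d}"
  then obtain i j where ij: "x = (S^^i) u" "y = (S^^j) u" by blast
  have "\<omega>1 x y = \<omega>1 u ((S^^i) ((S^^j) u))" unfolding ij using Spow_selfadj u Spow_W by blast
  also have "\<dots> = \<omega>1 u ((S^^(i+j)) u)" by (simp add: Spow_comp)
  finally have a: "\<omega>1 x y = \<omega>1 u ((S^^(i+j)) u)" .
  have "\<omega>1 u ((S^^(i+j)) u) = \<omega>1 ((S^^(i+j)) u) u" using Spow_selfadj u by simp
  also have "\<dots> = - \<omega>1 u ((S^^(i+j)) u)" by (rule sk_swap[OF s1])
  finally have "\<omega>1 u ((S^^(i+j)) u) = 0" by simp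
  then show "\<omega>1 x y = 0" using a by simp
qed

lemma Cy_iso2:
  assumes u: "u \<in> W" and cl: "(S^^d) u \<in> Cy u d"
  shows "iso \<omega>2 (Cy u d)"
  unfolding iso_def
proof (intro ballI)
  fix x y assume x: "x \<in> Cy u d" and y: "y \<in> Cy u d"
  have "\<omega>2 x y = \<omega>1 (S x) y" using Srep y Cy_W[OF u] by blast
  also have "\<dots> = 0" using Cy_iso1[OF u] Cy_inv[OF u cl x] y unfolding iso_def by blast
  finally show "\<omega>2 x y = 0" .
qed

lemma li_nz: "lin_indep_on f T \<Longrightarrow> finite T \<Longrightarrow> t \<in> T \<Longrightarrow> f t \<noteq> 0"
proof
  assume a: "lin_indep_on f T" "finite T" "t \<in> T" "f t = 0"
  define c where "c i = (if i = t then 1 else (0::complex))" for i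
  have "(\<Sum>i\<in>T. c i *s f i) = 0" using a
    by (simp add: c_def if_distrib[where f="\<lambda>c. c *s _"] sum.delta cong: if_cong)
  then have "c t = 0" using a unfolding lin_indep_on_def by blast
  then show False by (simp add: c_def)
qed

end

context cyc
begin

lemma step:
  assumes Wnz: "W \<noteq> {0}"
  shows "\<exists>A B P. subspace A \<and> subspace B \<and> subspace P \<and> A \<subseteq> W \<and> B \<subseteq> W \<and> P \<subseteq> W
    \<and> dim P < dim W \<and> rad P \<omega>1 = {0} \<and> iso \<omega>1 A \<and> iso \<omega>2 A \<and> iso \<omega>1 B \<and> iso \<omega>2 B
    \<and> (\<forall>a\<in>A. \<forall>p\<in>P. \<omega>1 a p = 0 \<and> \<omega>2 a p = 0) \<and> (\<forall>b\<in>B. \<forall>p\<in>P. \<omega>1 b p = 0 \<and> \<omega>2 b p = 0)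
    \<and> (\<forall>z\<in>W. \<exists>a\<in>A. \<exists>b\<in>B. \<exists>p\<in>P. z = a + b + p)
    \<and> (\<forall>a\<in>A. \<forall>b\<in>B. \<forall>p\<in>P. a + b + p = 0 \<longrightarrow> a = 0 \<and> b = 0 \<and> p = 0)"
proof -
  define D where "D = {k. \<exists>u\<in>W. lin_indep_on (\<lambda>i. (S^^i) u) {..<k}}"
  have Dbd: "k \<le> dim W" if kD: "k \<in> D" for k
  proof -
    obtain u where u: "u \<in> W" "lin_indep_on (\<lambda>i. (S^^i) u) {..<k}" using kD unfolding D_def by blast
    have "card {..<k} \<le> dim W" by (rule idx_card) (use u Spow_W in auto)
    then show ?thesis by simp
  qed
  have finD: "finite D" using Dbd by (meson finite_nat_set_iff_bounded_le)
  obtain u0 where u0: "u0 \<in> W" "u0 \<noteq> 0" using Wnz W subspace_0 by blast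
  have "lin_indep_on (\<lambda>i. (S^^i) u0) {..<1}"
    unfolding lin_indep_on_def using u0 by simp
  then have "1 \<in> D" unfolding D_def using u0 by blast
  define d where "d = Max D"
  have "d \<in> D" unfolding d_def using finD \<open>1 \<in> D\<close> by (intro Max_in) auto
  then obtain v where v: "v \<in> W" "lin_indep_on (\<lambda>i. (S^^i) v) {..<d}" unfolding D_def by blast
  have "1 \<le> d" unfolding d_def using finD \<open>1 \<in> D\<close> by (simp add: Max_ge)
  then obtain e where e: "d = Suc e" by (metis Suc_le_D One_nat_def)
  have maxd: "\<not> lin_indep_on (\<lambda>i. (S^^i) u) {..<Suc d}" if "u \<in> W" for u
  proof
    assume "lin_indep_on (\<lambda>i. (S^^i) u) {..<Suc d}"
    then have "Suc d \<in> D" unfolding D_def using that by blast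
    then have "Suc d \<le> d" unfolding d_def using finD by (simp add: Max_ge)
    then show False by simp
  qed
  have close: "(S^^d) u \<in> Cy u d" if "u \<in> W" "lin_indep_on (\<lambda>i. (S^^i) u) {..<d}" for u
    using ext_indep[OF that(2)] maxd[OF that(1)] by blast
  have vnz: "v \<noteq> 0" using li_nz[OF v(2)] e by fastforce
  have "\<exists>w0\<in>W. (\<forall>s\<in>Cy v e. \<omega>1 s w0 = 0) \<and> \<omega>1 ((S^^e) v) w0 \<noteq> 0"
  proof (rule ccontr)
    assume "\<not> ?thesis"
    then have h: "\<forall>w\<in>W. (\<forall>s\<in>Cy v e. \<omega>1 s w = 0) \<longrightarrow> \<omega>1 ((S^^e) v) w = 0" by blast
    obtain s where s: "s \<in> Cy v e" "\<forall>w\<in>W. \<omega>1 ((S^^e) v) w = \<omega>1 s w"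
      using rep_subspace[OF s1 W subspace_span lin2[OF s1] h] by blast
    have "(S^^e) v - s \<in> rad W \<omega>1"
      unfolding rad_def using s Spow_W v(1) Cy_W[OF v(1), of e] W
      by (auto simp: subspace_diff sk_diff1[OF s1])
    then have "(S^^e) v = s" using nd by simp
    then show False using not_in_span_last[of "\<lambda>i. (S^^i) v" e] v(2) e s(1) by simp
  qed
  then obtain w0 where w0: "w0 \<in> W" "\<forall>s\<in>Cy v e. \<omega>1 s w0 = 0" "\<omega>1 ((S^^e) v) w0 \<noteq> 0" by blast
  define w where "w = (1 / \<omega>1 ((S^^e) v) w0) *s w0"
  have wW: "w \<in> W" unfolding w_def using w0 W subspace_scale by blast
  have w1: "\<omega>1 ((S^^e) v) w = 1" unfolding w_def using w0(3) by (simp add: sk_scale2[OF s1])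
  have w2: "\<omega>1 ((S^^i) v) w = 0" if "i < e" for i
  proof -
    have "(S^^i) v \<in> Cy v e" using that by (intro span_base) blast
    then show ?thesis unfolding w_def using w0(2) by (simp add: sk_scale2[OF s1])
  qed
  define M where "M i j = \<omega>1 ((S^^i) v) ((S^^j) w)" for i j
  have Mij: "M i j = \<omega>1 ((S^^(j+i)) v) w" for i j
  proof -
    have "M i j = \<omega>1 ((S^^j) ((S^^i) v)) w"
      unfolding M_def using Spow_selfadj[of "(S^^i) v" w j] Spow_W v(1) wW by simp
    then show ?thesis by (simp add: Spow_comp)
  qed
  have low: "M i j = 0" if "i + j < d - 1" for i j using that w2 e Mij by (simp add: add.commute)
  have diag: "M i (d - 1 - i) \<noteq> 0" if "i < d" for i
  proof -
    have "d - 1 - i + i = e" using that e by simp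
    then show ?thesis using Mij w1 by simp
  qed
  have lowT: "M j i = 0" if "i + j < d - 1" for i j using low[of j i] that by (simp add: add.commute)
  have diagT: "M (d - 1 - i) i \<noteq> 0" if "i < d" for i
  proof -
    have "d - 1 - (d - 1 - i) = i" using that by simp
    then show ?thesis using diag[of "d - 1 - i"] that by simp
  qed
  have pairB: "\<omega>1 ((S^^i) v) (\<Sum>j<d. c j *s (S^^j) w) = (\<Sum>j<d. c j * M i j)" for i c
    unfolding M_def by (simp add: sk_sum2[OF s1] sk_scale2[OF s1])
  have pairA: "\<omega>1 (\<Sum>i<d. c i *s (S^^i) v) ((S^^j) w) = (\<Sum>i<d. c i * M i j)" for j c
    unfolding M_def by (simp add: sk_sum1[OF s1] sk_scale1[OF s1])
  have liw: "lin_indep_on (\<lambda>j. (S^^j) w) {..<d}"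
    unfolding lin_indep_on_def
  proof (intro allI impI)
    fix c assume "(\<Sum>j\<in>{..<d}. c j *s (S^^j) w) = 0"
    then have "(\<Sum>j<d. c j * M i j) = 0" if "i < d" for i
      using pairB[of i c] by (simp add: sk_zero2[OF s1])
    then show "\<forall>j\<in>{..<d}. c j = 0" using tri_lemma[of d M c] low diag by auto
  qed
  have nondB: "x = 0" if x: "x \<in> Cy w d" and h: "\<forall>a\<in>Cy v d. \<omega>1 a x = 0" for x
  proof -
    obtain c where c: "x = (\<Sum>j<d. c j *s (S^^j) w)" using span_idx[OF x] by auto
    have "(\<Sum>j<d. c j * M i j) = 0" if "i < d" for i
    proof -
      have "(S^^i) v \<in> Cy v d" using that by (intro span_base) blast
      then show ?thesis using h pairB[of i c] c by simp
    qed
    then have "\<forall>j<d. c j = 0" using tri_lemma[of d M c] low diag by auto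
    then show ?thesis using c by simp
  qed
  have nondA: "y = 0" if y: "y \<in> Cy v d" and h: "\<forall>b\<in>Cy w d. \<omega>1 y b = 0" for y
  proof -
    obtain c where c: "y = (\<Sum>i<d. c i *s (S^^i) v)" using span_idx[OF y] by auto
    define M' where "M' i j = M j i" for i j
    have "(\<Sum>i<d. c i * M' j i) = 0" if "j < d" for j
    proof -
      have "(S^^j) w \<in> Cy w d" using that by (intro span_base) blast
      then have "\<omega>1 y ((S^^j) w) = 0" using h by blast
      then show ?thesis using pairA[of c j] c unfolding M'_def by simp
    qed
    then have "\<forall>j<d. c j = 0" using tri_lemma[of d M' c] lowT diagT unfolding M'_def by auto
    then show ?thesis using c by simp
  qed
  have closev: "(S^^d) v \<in> Cy v d" using close v by blast
  have closew: "(S^^d) w \<in> Cy w d" using close wW liw by blast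
  define A where "A = Cy v d"
  define B where "B = Cy w d"
  define P where "P = {y\<in>W. (\<forall>x\<in>A. \<omega>1 x y = 0) \<and> (\<forall>x\<in>B. \<omega>1 x y = 0)}"
  have AW: "A \<subseteq> W" and BW: "B \<subseteq> W" unfolding A_def B_def using Cy_W v(1) wW by auto
  have PW: "P \<subseteq> W" unfolding P_def by auto
  have sP: "subspace P" unfolding P_def subspace_def using W
    by (auto simp: subspace_0 subspace_add subspace_scale sk_zero2[OF s1] sk_add2[OF s1] sk_scale2[OF s1])
  have isoA1: "iso \<omega>1 A" and isoA2: "iso \<omega>2 A" unfolding A_def
    using Cy_iso1[OF v(1)] Cy_iso2[OF v(1) closev] by auto
  have isoB1: "iso \<omega>1 B" and isoB2: "iso \<omega>2 B" unfolding B_def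
    using Cy_iso1[OF wW] Cy_iso2[OF wW closew] by auto
  have nondB': "x = 0" if "x \<in> B" "\<forall>a\<in>A. \<omega>1 a x = 0" for x using nondB that unfolding A_def B_def by blast
  have nondA': "y = 0" if "y \<in> A" "\<forall>b\<in>B. \<omega>1 y b = 0" for y using nondA that unfolding A_def B_def by blast
  have decomp: "\<exists>a\<in>A. \<exists>b\<in>B. \<exists>p\<in>P. z = a + b + p" if z: "z \<in> W" for z
  proof -
    obtain b where b: "b \<in> B" "\<forall>a'\<in>A. \<omega>1 z a' = \<omega>1 b a'"
    proof -
      have "\<exists>b\<in>B. \<forall>a'\<in>A. \<omega>1 z a' = \<omega>1 b a'"
      proof (rule rep_subspace[OF s1])
        show "subspace A" "subspace B" unfolding A_def B_def by auto
        show "lin (\<omega>1 z)" by (rule lin2[OF s1])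
        show "\<forall>a'\<in>A. (\<forall>s\<in>B. \<omega>1 s a' = 0) \<longrightarrow> \<omega>1 z a' = 0"
        proof (intro ballI impI)
          fix a' assume a': "a' \<in> A" "\<forall>s\<in>B. \<omega>1 s a' = 0"
          have "\<forall>s\<in>B. \<omega>1 a' s = 0" using a'(2) sk_swap[OF s1, of a'] by auto
          then have "a' = 0" using nondA' a'(1) by blast
          then show "\<omega>1 z a' = 0" by (simp add: sk_zero2[OF s1])
        qed
      qed
      then show ?thesis using that by blast
    qed
    obtain a where a: "a \<in> A" "\<forall>b'\<in>B. \<omega>1 z b' = \<omega>1 a b'"
    proof -
      have "\<exists>a\<in>A. \<forall>b'\<in>B. \<omega>1 z b' = \<omega>1 a b'"
      proof (rule rep_subspace[OF s1])
        show "subspace A" "subspace B" unfolding A_def B_def by auto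
        show "lin (\<omega>1 z)" by (rule lin2[OF s1])
        show "\<forall>b'\<in>B. (\<forall>s\<in>A. \<omega>1 s b' = 0) \<longrightarrow> \<omega>1 z b' = 0"
        proof (intro ballI impI)
          fix b' assume b': "b' \<in> B" "\<forall>s\<in>A. \<omega>1 s b' = 0"
          then have "b' = 0" using nondB' by blast
          then show "\<omega>1 z b' = 0" by (simp add: sk_zero2[OF s1])
        qed
      qed
      then show ?thesis using that by blast
    qed
    define p where "p = z - a - b"
    have pW: "p \<in> W" unfolding p_def using z a(1) b(1) AW BW W by (blast intro: subspace_diff)
    have "\<omega>1 x p = 0" if x: "x \<in> A" for x
    proof -
      have "\<omega>1 x p = \<omega>1 x z - \<omega>1 x a - \<omega>1 x b" unfolding p_def by (simp add: sk_diff2[OF s1])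
      moreover have "\<omega>1 x a = 0" using isoA1 x a(1) unfolding iso_def by blast
      moreover have "\<omega>1 x z = - \<omega>1 z x" by (rule sk_swap[OF s1])
      moreover have "\<omega>1 x b = - \<omega>1 b x" by (rule sk_swap[OF s1])
      ultimately show ?thesis using b(2) x by simp
    qed
    moreover have "\<omega>1 x p = 0" if x: "x \<in> B" for x
    proof -
      have "\<omega>1 x p = \<omega>1 x z - \<omega>1 x a - \<omega>1 x b" unfolding p_def by (simp add: sk_diff2[OF s1])
      moreover have "\<omega>1 x b = 0" using isoB1 x b(1) unfolding iso_def by blast
      moreover have "\<omega>1 x z = - \<omega>1 z x" by (rule sk_swap[OF s1])
      moreover have "\<omega>1 x a = - \<omega>1 a x" by (rule sk_swap[OF s1])
      ultimately show ?thesis using a(2) x by simp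
    qed
    ultimately have "p \<in> P" unfolding P_def using pW by blast
    moreover have "z = a + b + p" unfolding p_def by simp
    ultimately show ?thesis using a(1) b(1) by blast
  qed
  have uniq: "a = 0 \<and> b = 0 \<and> p = 0" if abp: "a \<in> A" "b \<in> B" "p \<in> P" "a + b + p = 0" for a b p
  proof -
    have "\<omega>1 x b = 0" if x: "x \<in> A" for x
    proof -
      have "\<omega>1 x (a + b + p) = 0" using abp by (simp add: sk_zero2[OF s1])
      moreover have "\<omega>1 x a = 0" using isoA1 x abp(1) unfolding iso_def by blast
      moreover have "\<omega>1 x p = 0" using abp(3) x unfolding P_def by blast
      ultimately show ?thesis by (simp add: sk_add2[OF s1])
    qed
    then have b0: "b = 0" using nondB' abp(2) by blast
    have "\<omega>1 a x = 0" if x: "x \<in> B" for x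
    proof -
      have "\<omega>1 x (a + b + p) = 0" using abp by (simp add: sk_zero2[OF s1])
      moreover have "\<omega>1 x b = 0" using isoB1 x abp(2) unfolding iso_def by blast
      moreover have "\<omega>1 x p = 0" using abp(3) x unfolding P_def by blast
      ultimately have "\<omega>1 x a = 0" by (simp add: sk_add2[OF s1])
      moreover have "\<omega>1 a x = - \<omega>1 x a" by (rule sk_swap[OF s1])
      ultimately show ?thesis by simp
    qed
    then have a0: "a = 0" using nondA' abp(1) by blast
    show ?thesis using a0 b0 abp(4) by simp
  qed
  have vA: "v \<in> A" unfolding A_def using e by (intro span_base) (auto intro!: image_eqI[of v _ 0])
  have "v \<notin> P"
  proof
    assume "v \<in> P"
    then have "\<forall>b\<in>B. \<omega>1 v b = 0" unfolding P_def using sk_swap[OF s1, of _ v] by auto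
    then show False using nondA' vA vnz by blast
  qed
  then have dimP: "dim P < dim W" using dim_lt_sub[OF sP W PW v(1)] by blast
  have radP: "rad P \<omega>1 = {0}"
  proof (intro equalityI subsetI)
    fix y assume y: "y \<in> rad P \<omega>1"
    then have yP: "y \<in> P" unfolding rad_def by blast
    have "\<omega>1 y z = 0" if z: "z \<in> W" for z
    proof -
      obtain a b p where abp: "a \<in> A" "b \<in> B" "p \<in> P" "z = a + b + p" using decomp[OF z] by blast
      have "\<omega>1 a y = 0" "\<omega>1 b y = 0" using yP abp unfolding P_def by auto
      moreover have "\<omega>1 y p = 0" using y abp(3) unfolding rad_def by blast
      moreover have "\<omega>1 y a = - \<omega>1 a y" "\<omega>1 y b = - \<omega>1 b y" by (rule sk_swap[OF s1])+
      ultimately show ?thesis using abp(4) by (simp add: sk_add2[OF s1])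
    qed
    then have "y \<in> rad W \<omega>1" unfolding rad_def using yP PW by blast
    then show "y \<in> {0}" using nd by simp
  next
    fix y :: 'a assume "y \<in> {0}" then show "y \<in> rad P \<omega>1"
      unfolding rad_def using sP subspace_0 by (auto simp: sk_zero1[OF s1])
  qed
  have orthA: "\<omega>1 a p = 0 \<and> \<omega>2 a p = 0" if "a \<in> A" "p \<in> P" for a p
  proof
    show "\<omega>1 a p = 0" using that unfolding P_def by blast
    have "S a \<in> A" unfolding A_def using Cy_inv[OF v(1) closev] that(1) A_def by blast
    then have "\<omega>1 (S a) p = 0" using that(2) unfolding P_def by blast
    moreover have "\<omega>2 a p = \<omega>1 (S a) p" using Srep that(2) PW by blast
    ultimately show "\<omega>2 a p = 0" by simp
  qed
  have orthB: "\<omega>1 b p = 0 \<and> \<omega>2 b p = 0" if "b \<in> B" "p \<in> P" for b p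
  proof
    show "\<omega>1 b p = 0" using that unfolding P_def by blast
    have "S b \<in> B" unfolding B_def using Cy_inv[OF wW closew] that(1) B_def by blast
    then have "\<omega>1 (S b) p = 0" using that(2) unfolding P_def by blast
    moreover have "\<omega>2 b p = \<omega>1 (S b) p" using Srep that(2) PW by blast
    ultimately show "\<omega>2 b p = 0" by simp
  qed
  have sA: "subspace A" and sB: "subspace B" unfolding A_def B_def by auto
  show ?thesis
    apply (rule exI[of _ A], rule exI[of _ B], rule exI[of _ P])
    apply (intro conjI)
    apply (fact sA) apply (fact sB) apply (fact sP) apply (fact AW) apply (fact BW) apply (fact PW)
    apply (fact dimP) apply (fact radP) apply (fact isoA1) apply (fact isoA2) apply (fact isoB1) apply (fact isoB2)
    using orthA apply blast
    using orthB apply blast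
    using decomp apply blast
    using uniq by blast
qed

end

context fcvs
begin

lemma splits_zero:
  assumes s1: "skew \<omega>1" and s2: "skew \<omega>2" and W: "W = {0}"
  shows "splits W {0} {0} \<omega>1 \<omega>2"
proof -
  have i1: "iso \<omega>1 {0}" unfolding iso_def using sk_zero1[OF s1] by simp
  have i2: "iso \<omega>2 {0}" unfolding iso_def using sk_zero1[OF s2] by simp
  have "\<forall>w\<in>W. \<exists>u\<in>{0}. \<exists>u'\<in>{0}. w = u + u'" using W by simp
  then show ?thesis unfolding splits_def using i1 i2 W by simp
qed

lemma regular:
  assumes s1: "skew \<omega>1" and s2: "skew \<omega>2"
  shows "subspace W \<Longrightarrow> rad W \<omega>1 = {0} \<Longrightarrow> \<exists>U U'. splits W U U' \<omega>1 \<omega>2"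
proof (induction "dim W" arbitrary: W rule: less_induct)
  case less
  show ?case
  proof (cases "W = {0}")
    case True
    then show ?thesis using splits_zero[OF s1 s2 True] by blast
  next
    case False
    obtain S where S: "\<forall>x. S x \<in> W" "\<forall>x. \<forall>w\<in>W. \<omega>2 x w = \<omega>1 (S x) w"
        "\<forall>x y. S (x + y) = S x + S y" "\<forall>c x. S (c *s x) = c *s S x"
      using op_exists[OF s1 s2 less.prems] by blast
    interpret C: cyc scale Basis \<omega>1 \<omega>2 W S
      by unfold_locales (use S s1 s2 less.prems in auto)
    obtain A B P where ABP: "subspace A" "subspace B" "subspace P" "A \<subseteq> W" "B \<subseteq> W" "P \<subseteq> W"
      "dim P < dim W" "rad P \<omega>1 = {0}" "iso \<omega>1 A" "iso \<omega>2 A" "iso \<omega>1 B" "iso \<omega>2 B"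
      "\<forall>a\<in>A. \<forall>p\<in>P. \<omega>1 a p = 0 \<and> \<omega>2 a p = 0" "\<forall>b\<in>B. \<forall>p\<in>P. \<omega>1 b p = 0 \<and> \<omega>2 b p = 0"
      "\<forall>z\<in>W. \<exists>a\<in>A. \<exists>b\<in>B. \<exists>p\<in>P. z = a + b + p"
      "\<forall>a\<in>A. \<forall>b\<in>B. \<forall>p\<in>P. a + b + p = 0 \<longrightarrow> a = 0 \<and> b = 0 \<and> p = 0"
      using C.step[OF False] apply (elim exE conjE) apply (rule that) by assumption+
    obtain U0 U0' where U0: "splits P U0 U0' \<omega>1 \<omega>2"
      using less.hyps[OF ABP(7) ABP(3) ABP(8)] by blast
    note U0u = U0[unfolded splits_def]
    have U0s: "subspace U0" "subspace U0'" "U0 \<subseteq> P" "U0' \<subseteq> P" "U0 \<inter> U0' = {0}"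
      "\<forall>w\<in>P. \<exists>u\<in>U0. \<exists>u'\<in>U0'. w = u + u'" "iso \<omega>1 U0" "iso \<omega>2 U0" "iso \<omega>1 U0'" "iso \<omega>2 U0'"
      using U0u apply -
      apply (elim conjE, assumption)+
      done
    define U where "U = {a + u |a u. a \<in> A \<and> u \<in> U0}"
    define U' where "U' = {b + u |b u. b \<in> B \<and> u \<in> U0'}"
    have "splits W U U' \<omega>1 \<omega>2"
      unfolding splits_def
    proof (intro conjI)
      show "subspace U" unfolding U_def using ABP(1) U0s(1) by (rule subspace_sums)
      show "subspace U'" unfolding U'_def using ABP(2) U0s(2) by (rule subspace_sums)
      show "U \<subseteq> W"
      proof
        fix x assume "x \<in> U"
        then obtain a u where "x = a + u" "a \<in> A" "u \<in> U0" unfolding U_def by blast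
        moreover have "a \<in> W" "u \<in> W" using calculation ABP(4,6) U0s(3) by auto
        ultimately show "x \<in> W" using less.prems(1) subspace_add by blast
      qed
      show "U' \<subseteq> W"
      proof
        fix x assume "x \<in> U'"
        then obtain a u where "x = a + u" "a \<in> B" "u \<in> U0'" unfolding U'_def by blast
        moreover have "a \<in> W" "u \<in> W" using calculation ABP(5,6) U0s(4) by auto
        ultimately show "x \<in> W" using less.prems(1) subspace_add by blast
      qed
      show "U \<inter> U' = {0}"
      proof (intro equalityI subsetI)
        fix x assume "x \<in> U \<inter> U'"
        then obtain a1 u1 b2 u2 where x: "x = a1 + u1" "x = b2 + u2" "a1 \<in> A" "u1 \<in> U0" "b2 \<in> B" "u2 \<in> U0'"
          unfolding U_def U'_def by blast
        have mb: "- b2 \<in> B" using x(5) ABP(2) subspace_neg by blast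
        have up: "u1 - u2 \<in> P" using x(4,6) U0s(3,4) ABP(3) subspace_diff by blast
        have "a1 + - b2 + (u1 - u2) = 0" using x(1,2) by (simp add: algebra_simps)
        then have "a1 = 0 \<and> - b2 = 0 \<and> u1 - u2 = 0" using ABP(16) x(3) mb up by blast
        then have "a1 = 0" "u1 = u2" by auto
        then have "u1 \<in> U0 \<inter> U0'" using x(4,6) by simp
        then have "u1 = 0" using U0s(5) by blast
        then show "x \<in> {0}" using x(1) \<open>a1 = 0\<close> by simp
      next
        fix x :: 'a assume "x \<in> {0}"
        then have x0: "x = 0 + 0" by simp
        have "0 \<in> A" "0 \<in> B" "0 \<in> U0" "0 \<in> U0'" using ABP(1,2) U0s(1,2) subspace_0 by auto
        then show "x \<in> U \<inter> U'" unfolding U_def U'_def using x0 by blast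
      qed
      show "\<forall>w\<in>W. \<exists>u\<in>U. \<exists>u'\<in>U'. w = u + u'"
      proof
        fix z assume "z \<in> W"
        then obtain a b p where abp: "a \<in> A" "b \<in> B" "p \<in> P" "z = a + b + p" using ABP(15) by blast
        then obtain u u' where uu: "u \<in> U0" "u' \<in> U0'" "p = u + u'" using U0s(6) by blast
        have "a + u \<in> U" unfolding U_def using abp uu by blast
        moreover have "b + u' \<in> U'" unfolding U'_def using abp uu by blast
        moreover have "z = (a + u) + (b + u')" using abp(4) uu(3) by (simp add: algebra_simps)
        ultimately show "\<exists>u\<in>U. \<exists>u'\<in>U'. z = u + u'" by blast
      qed
      show "iso \<omega>1 U" unfolding U_def using ABP(9,13) U0s(3,7) by (intro iso_sums[OF s1]) auto
      show "iso \<omega>2 U" unfolding U_def using ABP(10,13) U0s(3,8) by (intro iso_sums[OF s2]) auto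
      show "iso \<omega>1 U'" unfolding U'_def using ABP(11,14) U0s(4,9) by (intro iso_sums[OF s1]) auto
      show "iso \<omega>2 U'" unfolding U'_def using ABP(12,14) U0s(4,10) by (intro iso_sums[OF s2]) auto
    qed
    then show ?thesis by blast
  qed
qed

end

context fcvs
begin

definition good :: "'a set \<Rightarrow> ('a \<Rightarrow> 'a \<Rightarrow> complex) \<Rightarrow> ('a \<Rightarrow> 'a \<Rightarrow> complex) \<Rightarrow> bool" where
  "good W \<omega>1 \<omega>2 \<longleftrightarrow> (\<forall>a b. dim (rad W \<omega>1) \<le> dim (rad W (pen a b \<omega>1 \<omega>2)))"

lemma rad_pen_a0: "a \<noteq> 0 \<Longrightarrow> rad W (pen a 0 \<omega>1 \<omega>2) = rad W \<omega>1"
  unfolding rad_def pen_def by auto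

lemma rad_pen_00: "rad W (pen 0 0 \<omega>1 \<omega>2) = W"
  unfolding rad_def pen_def by auto

lemma dim_insert_le:
  assumes R: "subspace R" "x \<notin> R" and sub: "insert x R \<subseteq> T"
  shows "Suc (dim R) \<le> dim T"
  using dim_insert_sub[OF R] dim_subset[OF sub] by simp

lemma claimA:
  assumes s1: "skew \<omega>1" and s2: "skew \<omega>2" and W: "subspace W" and g: "good W \<omega>1 \<omega>2"
    and x: "x \<in> rad W \<omega>1" and k: "k \<in> rad W \<omega>1"
  shows "\<omega>2 x k = 0"
proof (rule ccontr)
  assume xk: "\<omega>2 x k \<noteq> 0"
  have xW: "x \<in> W" and kW: "k \<in> W" using x k unfolding rad_def by auto
  define H where "H = {h\<in>W. \<omega>2 x h = 0}"
  have H: "subspace H" unfolding H_def subspace_def using W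
    by (auto simp: subspace_0 subspace_add subspace_scale sk_zero2[OF s2] sk_add2[OF s2] sk_scale2[OF s2])
  have HW: "H \<subseteq> W" unfolding H_def by auto
  obtain t where t: "t \<noteq> 0" "dim (rad H (pen 1 t \<omega>1 \<omega>2)) \<le> dim (rad H \<omega>1)"
    using semicont[OF s1 s2 H] by blast
  define \<omega> where "\<omega> = pen 1 t \<omega>1 \<omega>2"
  have s: "skew \<omega>" unfolding \<omega>_def by (rule skew_pen[OF s1 s2])
  have x1: "\<omega>1 x y = 0" if "y \<in> W" for y using x that unfolding rad_def by blast
  have k1: "\<omega>1 k y = 0" if "y \<in> W" for y using k that unfolding rad_def by blast
  have "insert x (rad W \<omega>) \<subseteq> rad H \<omega>"
  proof
    fix y assume "y \<in> insert x (rad W \<omega>)"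
    then consider "y = x" | "y \<in> rad W \<omega>" by blast
    then show "y \<in> rad H \<omega>"
    proof cases
      case 1
      have "x \<in> H" unfolding H_def using xW by (simp add: sk_self[OF s2])
      moreover have "\<omega> x h = 0" if "h \<in> H" for h
        using that x1[of h] HW unfolding H_def \<omega>_def pen_def by auto
      ultimately show ?thesis using 1 unfolding rad_def by blast
    next
      case 2
      then have yW: "y \<in> W" and yr: "\<forall>z\<in>W. \<omega> y z = 0" unfolding rad_def by auto
      have "\<omega> x y = - \<omega> y x" by (rule sk_swap[OF s])
      then have "\<omega> x y = 0" using yr xW by simp
      then have "t * \<omega>2 x y = 0" using x1[OF yW] unfolding \<omega>_def pen_def by simp
      then have "y \<in> H" unfolding H_def using t(1) yW by simp
      then show ?thesis using yr HW unfolding rad_def by blast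
    qed
  qed
  moreover have "x \<notin> rad W \<omega>"
  proof
    assume "x \<in> rad W \<omega>"
    then have "\<omega> x k = 0" using kW unfolding rad_def by blast
    then show False using x1[OF kW] xk t(1) unfolding \<omega>_def pen_def by simp
  qed
  ultimately have i: "Suc (dim (rad W \<omega>)) \<le> dim (rad H \<omega>)"
    using dim_insert_le[OF rad_subspace[OF W s]] by blast
  have "insert k (rad H \<omega>1) \<subseteq> rad W \<omega>1"
  proof
    fix y assume "y \<in> insert k (rad H \<omega>1)"
    then consider "y = k" | "y \<in> rad H \<omega>1" by blast
    then show "y \<in> rad W \<omega>1"
    proof cases
      case 1 then show ?thesis using k by simp
    next
      case 2
      then have yH: "y \<in> H" and yr: "\<forall>h\<in>H. \<omega>1 y h = 0" unfolding rad_def by auto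
      have "\<omega>1 y z = 0" if z: "z \<in> W" for z
      proof -
        define c where "c = \<omega>2 x z / \<omega>2 x k"
        have "z - c *s k \<in> H" unfolding H_def c_def using z kW W xk
          by (simp add: subspace_diff subspace_scale sk_diff2[OF s2] sk_scale2[OF s2])
        then have "\<omega>1 y (z - c *s k) = 0" using yr by blast
        moreover have "\<omega>1 y k = 0"
        proof -
          have "\<omega>1 y k = - \<omega>1 k y" by (rule sk_swap[OF s1])
          then show ?thesis using k1 yH HW by auto
        qed
        ultimately show ?thesis by (simp add: sk_diff2[OF s1] sk_scale2[OF s1])
      qed
      then show ?thesis using yH HW unfolding rad_def by blast
    qed
  qed
  moreover have "k \<notin> rad H \<omega>1" using xk unfolding rad_def H_def by blast
  ultimately have ii: "Suc (dim (rad H \<omega>1)) \<le> dim (rad W \<omega>1)"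
    using dim_insert_le[OF rad_subspace[OF H s1]] by blast
  have "dim (rad W \<omega>1) \<le> dim (rad W \<omega>)" using g unfolding good_def \<omega>_def by blast
  then show False using i ii t(2) unfolding \<omega>_def by simp
qed

end

context fcvs
begin

lemma pen_10: "pen 1 0 \<omega>1 \<omega>2 = \<omega>1"
  unfolding pen_def by simp

lemma hered_chain:
  assumes s1: "skew \<omega>1" and s2: "skew \<omega>2" and W: "subspace W" and g: "good W \<omega>1 \<omega>2"
    and x0: "x0 \<in> rad W \<omega>1" and y0: "y0 \<in> W" "\<omega>2 x0 y0 \<noteq> 0"
  shows "good {h\<in>W. \<omega>2 x0 h = 0} \<omega>1 \<omega>2"
proof -
  define H where "H = {h\<in>W. \<omega>2 x0 h = 0}"
  have H: "subspace H" unfolding H_def subspace_def using W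
    by (auto simp: subspace_0 subspace_add subspace_scale sk_zero2[OF s2] sk_add2[OF s2] sk_scale2[OF s2])
  have HW: "H \<subseteq> W" unfolding H_def by auto
  have x0W: "x0 \<in> W" using x0 unfolding rad_def by auto
  have x01: "\<omega>1 x0 y = 0" if "y \<in> W" for y using x0 that unfolding rad_def by blast
  have x0H: "x0 \<in> H" unfolding H_def using x0W by (simp add: sk_self[OF s2])
  define L where "L = {k\<in>rad H \<omega>1. \<omega>1 k y0 = 0}"
  have LW: "L \<subseteq> rad W \<omega>1"
  proof
    fix k assume kL: "k \<in> L"
    then have kH: "k \<in> H" and kr: "\<forall>h\<in>H. \<omega>1 k h = 0" and ky: "\<omega>1 k y0 = 0"
      unfolding L_def rad_def by auto
    have "\<omega>1 k z = 0" if z: "z \<in> W" for z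
    proof -
      define c where "c = \<omega>2 x0 z / \<omega>2 x0 y0"
      have "z - c *s y0 \<in> H" unfolding H_def c_def using z y0 W
        by (simp add: subspace_diff subspace_scale sk_diff2[OF s2] sk_scale2[OF s2])
      then have "\<omega>1 k (z - c *s y0) = 0" using kr by blast
      then show ?thesis using ky by (simp add: sk_diff2[OF s1] sk_scale2[OF s1])
    qed
    then show "k \<in> rad W \<omega>1" using kH HW unfolding rad_def by blast
  qed
  have R2: "dim (rad H \<omega>1) \<le> Suc (dim (rad W \<omega>1))"
  proof -
    have "dim (rad H \<omega>1) \<le> Suc (dim L)"
      unfolding L_def by (rule codim1[OF rad_subspace[OF H s1] lin1[OF s1]])
    also have "dim L \<le> dim (rad W \<omega>1)" using LW by (rule dim_subset)
    finally show ?thesis by simp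
  qed
  show ?thesis unfolding good_def H_def[symmetric]
  proof (intro allI)
    fix a b
    show "dim (rad H \<omega>1) \<le> dim (rad H (pen a b \<omega>1 \<omega>2))"
    proof (cases "b = 0")
      case True
      show ?thesis
      proof (cases "a = 0")
        case True
        then show ?thesis using \<open>b = 0\<close> rad_pen_00 rad_sub[of H \<omega>1] dim_subset by metis
      next
        case False
        then show ?thesis using \<open>b = 0\<close> rad_pen_a0[OF False, of H \<omega>1 \<omega>2] by simp
      qed
    next
      case False
      define \<omega> where "\<omega> = pen a b \<omega>1 \<omega>2"
      have s: "skew \<omega>" unfolding \<omega>_def by (rule skew_pen[OF s1 s2])
      have \<omega>x0: "\<omega> x0 y = b * \<omega>2 x0 y" if "y \<in> W" for y
        using x01[OF that] unfolding \<omega>_def pen_def by simp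
      have "insert x0 (rad W \<omega>) \<subseteq> rad H \<omega>"
      proof
        fix y assume "y \<in> insert x0 (rad W \<omega>)"
        then consider "y = x0" | "y \<in> rad W \<omega>" by blast
        then show "y \<in> rad H \<omega>"
        proof cases
          case 1
          have "\<omega> x0 h = 0" if "h \<in> H" for h
            using that \<omega>x0[of h] HW unfolding H_def by auto
          then show ?thesis using 1 x0H unfolding rad_def by blast
        next
          case 2
          then have yW: "y \<in> W" and yr: "\<forall>z\<in>W. \<omega> y z = 0" unfolding rad_def by auto
          have "\<omega> x0 y = - \<omega> y x0" by (rule sk_swap[OF s])
          then have "\<omega> x0 y = 0" using yr x0W by simp
          then have "\<omega>2 x0 y = 0" using \<omega>x0[OF yW] False by simp
          then have "y \<in> H" unfolding H_def using yW by simp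
          then show ?thesis using yr HW unfolding rad_def by blast
        qed
      qed
      moreover have "x0 \<notin> rad W \<omega>"
      proof
        assume "x0 \<in> rad W \<omega>"
        then have "\<omega> x0 y0 = 0" using y0 unfolding rad_def by blast
        then show False using \<omega>x0[OF y0(1)] y0(2) False by simp
      qed
      ultimately have i: "Suc (dim (rad W \<omega>)) \<le> dim (rad H \<omega>)"
        using dim_insert_le[OF rad_subspace[OF W s]] by blast
      have "dim (rad W \<omega>1) \<le> dim (rad W \<omega>)" using g unfolding good_def \<omega>_def by blast
      then show ?thesis using i R2 unfolding \<omega>_def by simp
    qed
  qed
qed

lemma hered_rad:
  assumes s: "skew \<omega>" and W: "subspace W" and x0: "x0 \<in> rad W \<omega>"
    and H: "subspace H" "H \<subseteq> W" "x0 \<notin> H" and dec: "\<forall>w\<in>W. \<exists>c. w - c *s x0 \<in> H"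
  shows "dim (rad W \<omega>) = Suc (dim (rad H \<omega>))"
proof -
  have x0W: "x0 \<in> W" using x0 unfolding rad_def by auto
  have x0r: "\<omega> x0 y = 0" if "y \<in> W" for y using x0 that unfolding rad_def by blast
  have x0r': "\<omega> y x0 = 0" if "y \<in> W" for y
  proof -
    have "\<omega> y x0 = - \<omega> x0 y" by (rule sk_swap[OF s])
    then show ?thesis using x0r[OF that] by simp
  qed
  have sub: "rad H \<omega> \<subseteq> rad W \<omega>"
  proof
    fix h assume h: "h \<in> rad H \<omega>"
    then have hH: "h \<in> H" and hr: "\<forall>k\<in>H. \<omega> h k = 0" unfolding rad_def by auto
    have "\<omega> h w = 0" if w: "w \<in> W" for w
    proof -
      obtain c where c: "w - c *s x0 \<in> H" using dec w by blast
      then have "\<omega> h (w - c *s x0) = 0" using hr by blast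
      moreover have "\<omega> h x0 = 0" using x0r' hH H(2) by blast
      ultimately show ?thesis by (simp add: sk_diff2[OF s] sk_scale2[OF s])
    qed
    then show "h \<in> rad W \<omega>" using hH H(2) unfolding rad_def by blast
  qed
  have "x0 \<notin> rad H \<omega>" using H(3) unfolding rad_def by blast
  moreover have "insert x0 (rad H \<omega>) \<subseteq> rad W \<omega>" using sub x0 by blast
  ultimately have le: "Suc (dim (rad H \<omega>)) \<le> dim (rad W \<omega>)"
    using dim_insert_le[OF rad_subspace[OF H(1) s]] by blast
  have "rad W \<omega> \<subseteq> span (insert x0 (rad H \<omega>))"
  proof
    fix y assume y: "y \<in> rad W \<omega>"
    then have yW: "y \<in> W" and yr: "\<forall>z\<in>W. \<omega> y z = 0" unfolding rad_def by auto
    obtain c where c: "y - c *s x0 \<in> H" using dec yW by blast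
    have "\<omega> (y - c *s x0) k = 0" if "k \<in> H" for k
      using that yr x0r H(2) by (auto simp: sk_diff1[OF s] sk_scale1[OF s])
    then have "y - c *s x0 \<in> rad H \<omega>" using c unfolding rad_def by blast
    then show "y \<in> span (insert x0 (rad H \<omega>))" using span_breakdown_eq span_base by blast
  qed
  then have "dim (rad W \<omega>) \<le> dim (insert x0 (rad H \<omega>))" by (rule subset_le_dim)
  also have "\<dots> = Suc (dim (rad H \<omega>))" using dim_insert_sub[OF rad_subspace[OF H(1) s] \<open>x0 \<notin> rad H \<omega>\<close>] .
  finally show ?thesis using le by simp
qed

lemma hered_common:
  assumes s1: "skew \<omega>1" and s2: "skew \<omega>2" and W: "subspace W" and g: "good W \<omega>1 \<omega>2"
    and x0: "x0 \<in> rad W \<omega>1" "x0 \<in> rad W \<omega>2"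
    and H: "subspace H" "H \<subseteq> W" "x0 \<notin> H" and dec: "\<forall>w\<in>W. \<exists>c. w - c *s x0 \<in> H"
  shows "good H \<omega>1 \<omega>2"
  unfolding good_def
proof (intro allI)
  fix a b
  have xp: "x0 \<in> rad W (pen a b \<omega>1 \<omega>2)" using x0 unfolding rad_def pen_def by auto
  have "dim (rad W \<omega>1) = Suc (dim (rad H \<omega>1))" by (rule hered_rad[OF s1 W x0(1) H dec])
  moreover have "dim (rad W (pen a b \<omega>1 \<omega>2)) = Suc (dim (rad H (pen a b \<omega>1 \<omega>2)))"
    by (rule hered_rad[OF skew_pen[OF s1 s2] W xp H dec])
  moreover have "dim (rad W \<omega>1) \<le> dim (rad W (pen a b \<omega>1 \<omega>2))" using g unfolding good_def by blast
  ultimately show "dim (rad H \<omega>1) \<le> dim (rad H (pen a b \<omega>1 \<omega>2))" by simp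
qed

end

context fcvs
begin

lemma expand9:
  assumes s: "skew \<omega>"
  shows "\<omega> (a + b + c) (d + e + f) = \<omega> a d + \<omega> a e + \<omega> a f + \<omega> b d + \<omega> b e + \<omega> b f + \<omega> c d + \<omega> c e + \<omega> c f"
  by (simp add: sk_add1[OF s] sk_add2[OF s] algebra_simps)

lemma main_split:
  assumes s1: "skew \<omega>1" and s2: "skew \<omega>2"
  shows "subspace W \<Longrightarrow> good W \<omega>1 \<omega>2 \<Longrightarrow> \<exists>U U'. splits W U U' \<omega>1 \<omega>2 \<and> rad W \<omega>1 \<subseteq> U"
proof (induction "dim W" arbitrary: W rule: less_induct)
  case less
  have W: "subspace W" and g: "good W \<omega>1 \<omega>2" using less.prems by auto
  show ?case
  proof (cases "\<exists>x0. x0 \<noteq> 0 \<and> x0 \<in> rad W \<omega>1 \<and> x0 \<in> rad W \<omega>2")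
    case True
    then obtain x0 where x0: "x0 \<noteq> 0" "x0 \<in> rad W \<omega>1" "x0 \<in> rad W \<omega>2" by blast
    have x0W: "x0 \<in> W" using x0 unfolding rad_def by auto
    have spW: "span {x0} \<subseteq> W" using x0W W by (simp add: span_minimal)
    obtain H where H: "subspace H" "H \<subseteq> W" "span {x0} \<inter> H = {0}" "\<forall>w\<in>W. \<exists>a\<in>span {x0}. \<exists>m\<in>H. w = a + m"
      using complement_exists[OF subspace_span W spW] by blast
    have x0H: "x0 \<notin> H" using H(3) x0(1) span_base[of x0 "{x0}"] by blast
    have dec: "\<forall>w\<in>W. \<exists>c. w - c *s x0 \<in> H"
    proof
      fix w assume "w \<in> W"
      then obtain a m where am: "a \<in> span {x0}" "m \<in> H" "w = a + m" using H(4) by blast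
      then obtain c where "a = c *s x0" using span_singleton by blast
      then have "w - c *s x0 \<in> H" using am by simp
      then show "\<exists>c. w - c *s x0 \<in> H" by blast
    qed
    have dimH: "dim H < dim W" by (rule dim_lt_sub[OF H(1) W H(2) x0W x0H])
    have gH: "good H \<omega>1 \<omega>2" by (rule hered_common[OF s1 s2 W g x0(2,3) H(1,2) x0H dec])
    obtain U0 U0' where U0: "splits H U0 U0' \<omega>1 \<omega>2" "rad H \<omega>1 \<subseteq> U0"
      using less.hyps[OF dimH H(1) gH] by blast
    note U0u = U0(1)[unfolded splits_def]
    have U0s: "subspace U0" "subspace U0'" "U0 \<subseteq> H" "U0' \<subseteq> H" "U0 \<inter> U0' = {0}"
      "\<forall>w\<in>H. \<exists>u\<in>U0. \<exists>u'\<in>U0'. w = u + u'" "iso \<omega>1 U0" "iso \<omega>2 U0" "iso \<omega>1 U0'" "iso \<omega>2 U0'"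
      using U0u apply -
      apply (elim conjE, assumption)+
      done
    have x01: "\<omega>1 x0 y = 0" "\<omega>1 y x0 = 0" if "y \<in> W" for y
      using x0(2) that sk_swap[OF s1, of y x0] unfolding rad_def by auto
    have x02: "\<omega>2 x0 y = 0" "\<omega>2 y x0 = 0" if "y \<in> W" for y
      using x0(3) that sk_swap[OF s2, of y x0] unfolding rad_def by auto
    define U where "U = {u + v |u v. u \<in> U0 \<and> v \<in> span {x0}}"
    have sU: "subspace U" unfolding U_def by (rule subspace_sums[OF U0s(1) subspace_span])
    have UW: "U \<subseteq> W"
    proof
      fix x assume "x \<in> U"
      then obtain u v where "x = u + v" "u \<in> U0" "v \<in> span {x0}" unfolding U_def by blast
      moreover have "u \<in> W" "v \<in> W" using calculation U0s(3) H(2) spW by auto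
      ultimately show "x \<in> W" using W subspace_add by blast
    qed
    have isoU: "iso \<omega> U" if s: "skew \<omega>" and i0: "iso \<omega> U0" and xr: "\<And>y. y \<in> W \<Longrightarrow> \<omega> x0 y = 0 \<and> \<omega> y x0 = 0" for \<omega>
      unfolding U_def
    proof (rule iso_sums[OF s i0])
      show "iso \<omega> (span {x0})" by (rule iso_span[OF s]) (use xr x0W in simp)
      show "\<forall>a\<in>U0. \<forall>b\<in>span {x0}. \<omega> a b = 0"
      proof (intro ballI)
        fix a b assume ab: "a \<in> U0" "b \<in> span {x0}"
        then obtain c where "b = c *s x0" using span_singleton by blast
        then show "\<omega> a b = 0" using xr[of a] ab U0s(3) H(2) by (auto simp: sk_scale2[OF s])
      qed
    qed
    have "splits W U U0' \<omega>1 \<omega>2"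
      unfolding splits_def
    proof (intro conjI)
      show "subspace U" by (fact sU)
      show "subspace U0'" by (fact U0s(2))
      show "U \<subseteq> W" by (fact UW)
      show "U0' \<subseteq> W" using U0s(4) H(2) by blast
      show "U \<inter> U0' = {0}"
      proof (intro equalityI subsetI)
        fix x assume "x \<in> U \<inter> U0'"
        then obtain u v where x: "x = u + v" "u \<in> U0" "v \<in> span {x0}" "x \<in> U0'" unfolding U_def by blast
        obtain c where c: "v = c *s x0" using x(3) span_singleton by blast
        have "v = x - u" using x(1) by simp
        moreover have "x - u \<in> H" using x(2,4) U0s(3,4) H(1) subspace_diff by blast
        ultimately have "v \<in> span {x0} \<inter> H" using x(3) by simp
        then have "v = 0" using H(3) by blast
        then have "x \<in> U0 \<inter> U0'" using x by simp
        then show "x \<in> {0}" using U0s(5) by blast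
      next
        fix x :: 'a assume "x \<in> {0}"
        then have x0': "x = 0 + 0" by simp
        have "0 \<in> U0" "0 \<in> span {x0}" "0 \<in> U0'" using U0s(1,2) subspace_0 span_zero by auto
        then show "x \<in> U \<inter> U0'" unfolding U_def using x0' \<open>x \<in> {0}\<close>
          by (metis (mono_tags, lifting) IntI mem_Collect_eq singletonD)
      qed
      show "\<forall>w\<in>W. \<exists>u\<in>U. \<exists>u'\<in>U0'. w = u + u'"
      proof
        fix w assume "w \<in> W"
        then obtain c where c: "w - c *s x0 \<in> H" using dec by blast
        then obtain u u' where uu: "u \<in> U0" "u' \<in> U0'" "w - c *s x0 = u + u'" using U0s(6) by blast
        have "u + c *s x0 \<in> U" unfolding U_def using uu(1) span_scale[OF span_base[of x0 "{x0}"]] by blast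
        moreover have "w = (u + c *s x0) + u'" using uu(3) by (simp add: algebra_simps)
        ultimately show "\<exists>u\<in>U. \<exists>u'\<in>U0'. w = u + u'" using uu(2) by blast
      qed
      show "iso \<omega>1 U" by (rule isoU[OF s1 U0s(7)]) (use x01 in blast)
      show "iso \<omega>2 U" by (rule isoU[OF s2 U0s(8)]) (use x02 in blast)
      show "iso \<omega>1 U0'" by (fact U0s(9))
      show "iso \<omega>2 U0'" by (fact U0s(10))
    qed
    moreover have "rad W \<omega>1 \<subseteq> U"
    proof
      fix y assume y: "y \<in> rad W \<omega>1"
      then have yW: "y \<in> W" and yr: "\<forall>z\<in>W. \<omega>1 y z = 0" unfolding rad_def by auto
      obtain c where c: "y - c *s x0 \<in> H" using dec yW by blast
      have "\<omega>1 (y - c *s x0) k = 0" if "k \<in> H" for k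
        using that yr x01 H(2) by (auto simp: sk_diff1[OF s1] sk_scale1[OF s1])
      then have "y - c *s x0 \<in> rad H \<omega>1" using c unfolding rad_def by blast
      then have "y - c *s x0 \<in> U0" using U0(2) by blast
      moreover have "c *s x0 \<in> span {x0}" using span_scale[OF span_base[of x0 "{x0}"]] by blast
      moreover have "y = (y - c *s x0) + c *s x0" by simp
      ultimately show "y \<in> U" unfolding U_def by blast
    qed
    ultimately show ?thesis by blast
  next
    case False
    note noc = False
    show ?thesis
    proof (cases "rad W \<omega>1 = {0}")
      case True
      obtain U U' where UU: "splits W U U' \<omega>1 \<omega>2" using regular[OF s1 s2 W True] by blast
      then have "0 \<in> U" unfolding splits_def using subspace_0 by blast
      then have "rad W \<omega>1 \<subseteq> U" using True by simp
      then show ?thesis using UU by blast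
    next
      case False
      have "0 \<in> rad W \<omega>1" using rad_subspace[OF W s1] subspace_0 by blast
      then obtain x0 where x0: "x0 \<in> rad W \<omega>1" "x0 \<noteq> 0" using False by blast
      have x0W: "x0 \<in> W" using x0 unfolding rad_def by auto
      have "x0 \<notin> rad W \<omega>2" using noc x0 by blast
      then obtain y0 where y0: "y0 \<in> W" "\<omega>2 x0 y0 \<noteq> 0" using x0W unfolding rad_def by blast
      define H where "H = {h\<in>W. \<omega>2 x0 h = 0}"
      have H: "subspace H" unfolding H_def subspace_def using W
        by (auto simp: subspace_0 subspace_add subspace_scale sk_zero2[OF s2] sk_add2[OF s2] sk_scale2[OF s2])
      have HW: "H \<subseteq> W" unfolding H_def by auto
      have y0H: "y0 \<notin> H" unfolding H_def using y0 by blast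
      have dimH: "dim H < dim W" by (rule dim_lt_sub[OF H W HW y0(1) y0H])
      have gH: "good H \<omega>1 \<omega>2" unfolding H_def by (rule hered_chain[OF s1 s2 W g x0(1) y0])
      obtain U0 U0' where U0: "splits H U0 U0' \<omega>1 \<omega>2" "rad H \<omega>1 \<subseteq> U0"
        using less.hyps[OF dimH H gH] by blast
      note U0u = U0(1)[unfolded splits_def]
      have U0s: "subspace U0" "subspace U0'" "U0 \<subseteq> H" "U0' \<subseteq> H" "U0 \<inter> U0' = {0}"
        "\<forall>w\<in>H. \<exists>u\<in>U0. \<exists>u'\<in>U0'. w = u + u'" "iso \<omega>1 U0" "iso \<omega>2 U0" "iso \<omega>1 U0'" "iso \<omega>2 U0'"
        using U0u apply -
        apply (elim conjE, assumption)+
        done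
      have x01: "\<omega>1 x0 z = 0" "\<omega>1 z x0 = 0" if "z \<in> W" for z
        using x0(1) that sk_swap[OF s1, of z x0] unfolding rad_def by auto
      have x0H: "x0 \<in> H" unfolding H_def using x0W by (simp add: sk_self[OF s2])
      have x0rH: "x0 \<in> rad H \<omega>1" unfolding rad_def using x0H x01 HW by blast
      have x0U: "x0 \<in> U0" using x0rH U0(2) by blast
      have radW: "rad W \<omega>1 \<subseteq> U0"
      proof
        fix z assume z: "z \<in> rad W \<omega>1"
        then have zW: "z \<in> W" unfolding rad_def by auto
        have "\<omega>2 x0 z = 0" by (rule claimA[OF s1 s2 W g x0(1) z])
        then have "z \<in> H" unfolding H_def using zW by simp
        then have "z \<in> rad H \<omega>1" using z HW unfolding rad_def by blast
        then show "z \<in> U0" using U0(2) by blast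
      qed
      have "\<exists>y\<in>W. (\<forall>u\<in>U0'. \<omega>1 u y = 0) \<and> \<omega>2 x0 y \<noteq> 0"
      proof (rule ccontr)
        assume "\<not> ?thesis"
        then have h: "\<forall>w\<in>W. (\<forall>u\<in>U0'. \<omega>1 u w = 0) \<longrightarrow> \<omega>2 x0 w = 0" by blast
        obtain u where u: "u \<in> U0'" "\<forall>w\<in>W. \<omega>2 x0 w = \<omega>1 u w"
          using rep_subspace[OF s1 W U0s(2) lin2[OF s2] h] by blast
        have uH: "u \<in> H" using u(1) U0s(4) by blast
        have "\<omega>1 u h = 0" if "h \<in> H" for h using u(2) that HW unfolding H_def by auto
        then have "u \<in> rad H \<omega>1" using uH unfolding rad_def by blast
        then have "u \<in> U0 \<inter> U0'" using U0(2) u(1) by blast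
        then have "u = 0" using U0s(5) by blast
        then show False using u(2) y0 by (simp add: sk_zero1[OF s1])
      qed
      then obtain y where y: "y \<in> W" "\<forall>u\<in>U0'. \<omega>1 u y = 0" "\<omega>2 x0 y \<noteq> 0" by blast
      have yx0: "\<omega>2 y x0 = - \<omega>2 x0 y" by (rule sk_swap[OF s2])
      have yx0nz: "\<omega>2 y x0 \<noteq> 0" using yx0 y(3) by simp
      define g where "g w = - \<omega>2 y w / \<omega>2 y x0" for w
      have g_add: "g (a + b) = g a + g b" for a b unfolding g_def using yx0nz by (simp add: sk_add2[OF s2] field_simps)
      have g_sc: "g (k *s a) = k * g a" for k a unfolding g_def by (simp add: sk_scale2[OF s2])
      have g0: "g 0 = 0" unfolding g_def by (simp add: sk_zero2[OF s2])
      define U' where "U' = {w + g w *s x0 + c *s y |w c. w \<in> U0'}"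
      have sU': "subspace U'"
        unfolding subspace_def
      proof (intro conjI ballI allI)
        have "0 = 0 + g 0 *s x0 + 0 *s y" by (simp add: g0)
        then show "0 \<in> U'" unfolding U'_def using U0s(2) subspace_0 by blast
      next
        fix p q assume "p \<in> U'" "q \<in> U'"
        then obtain w1 c1 w2 c2 where pq: "p = w1 + g w1 *s x0 + c1 *s y" "w1 \<in> U0'"
          "q = w2 + g w2 *s x0 + c2 *s y" "w2 \<in> U0'" unfolding U'_def by blast
        have "p + q = (w1 + w2) + g (w1 + w2) *s x0 + (c1 + c2) *s y"
          using pq by (simp add: g_add algebra_simps)
        moreover have "w1 + w2 \<in> U0'" using pq U0s(2) subspace_add by blast
        ultimately show "p + q \<in> U'" unfolding U'_def by blast
      next
        fix k p assume "p \<in> U'"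
        then obtain w1 c1 where p: "p = w1 + g w1 *s x0 + c1 *s y" "w1 \<in> U0'" unfolding U'_def by blast
        have "k *s p = (k *s w1) + g (k *s w1) *s x0 + (k * c1) *s y"
          using p by (simp add: g_sc algebra_simps)
        moreover have "k *s w1 \<in> U0'" using p U0s(2) subspace_scale by blast
        ultimately show "k *s p \<in> U'" unfolding U'_def by blast
      qed
      have U'W: "U' \<subseteq> W"
      proof
        fix p assume "p \<in> U'"
        then obtain w c where p: "p = w + g w *s x0 + c *s y" "w \<in> U0'" unfolding U'_def by blast
        have "w \<in> W" using p(2) U0s(4) HW by blast
        then show "p \<in> W" using p(1) x0W y(1) W by (simp add: subspace_add subspace_scale)
      qed
      have wW: "w \<in> W" and wH: "w \<in> H" if "w \<in> U0'" for w using that U0s(4) HW by auto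
      have "splits W U0 U' \<omega>1 \<omega>2"
        unfolding splits_def
      proof (intro conjI)
        show "subspace U0" by (fact U0s(1))
        show "subspace U'" by (fact sU')
        show "U0 \<subseteq> W" using U0s(3) HW by blast
        show "U' \<subseteq> W" by (fact U'W)
        show "U0 \<inter> U' = {0}"
        proof (intro equalityI subsetI)
          fix v assume "v \<in> U0 \<inter> U'"
          then obtain w c where v: "v \<in> U0" "v = w + g w *s x0 + c *s y" "w \<in> U0'" unfolding U'_def by blast
          have "\<omega>2 x0 v = 0" using v(1) U0s(3) unfolding H_def by blast
          moreover have "\<omega>2 x0 v = c * \<omega>2 x0 y"
            using v(2) wH[OF v(3)] unfolding H_def by (simp add: sk_add2[OF s2] sk_scale2[OF s2] sk_self[OF s2])
          ultimately have c0: "c = 0" using y(3) by simp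
          then have "w = v - g w *s x0" using v(2) by simp
          moreover have "v - g w *s x0 \<in> U0" using v(1) x0U U0s(1) by (simp add: subspace_diff subspace_scale)
          ultimately have "w \<in> U0 \<inter> U0'" using v(3) by simp
          then have "w = 0" using U0s(5) by blast
          then show "v \<in> {0}" using v(2) c0 g0 by simp
        next
          fix v :: 'a assume "v \<in> {0}"
          then have v0: "v = 0 + g 0 *s x0 + 0 *s y" by (simp add: g0)
          have "0 \<in> U0" "0 \<in> U0'" using U0s(1,2) subspace_0 by auto
          have "v \<in> U'" unfolding U'_def using v0 \<open>0 \<in> U0'\<close> by blast
          moreover have "v \<in> U0" using \<open>v \<in> {0}\<close> \<open>0 \<in> U0\<close> by simp
          ultimately show "v \<in> U0 \<inter> U'" by blast
        qed
        show "\<forall>z\<in>W. \<exists>u\<in>U0. \<exists>u'\<in>U'. z = u + u'"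
        proof
          fix z assume z: "z \<in> W"
          define c where "c = \<omega>2 x0 z / \<omega>2 x0 y"
          have "z - c *s y \<in> H" unfolding H_def c_def using z y W
            by (simp add: subspace_diff subspace_scale sk_diff2[OF s2] sk_scale2[OF s2])
          then obtain u u' where uu: "u \<in> U0" "u' \<in> U0'" "z - c *s y = u + u'" using U0s(6) by blast
          have "u - g u' *s x0 \<in> U0" using uu(1) x0U U0s(1) by (simp add: subspace_diff subspace_scale)
          moreover have "u' + g u' *s x0 + c *s y \<in> U'" unfolding U'_def using uu(2) by blast
          moreover have "z = (u - g u' *s x0) + (u' + g u' *s x0 + c *s y)"
            using uu(3) by (simp add: algebra_simps)
          ultimately show "\<exists>u\<in>U0. \<exists>u'\<in>U'. z = u + u'" by blast
        qed
        show "iso \<omega>1 U0" by (fact U0s(7))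
        show "iso \<omega>2 U0" by (fact U0s(8))
        show "iso \<omega>1 U'"
          unfolding iso_def
        proof (intro ballI)
          fix p q assume "p \<in> U'" "q \<in> U'"
          then obtain w1 c1 w2 c2 where pq: "p = w1 + g w1 *s x0 + c1 *s y" "w1 \<in> U0'"
            "q = w2 + g w2 *s x0 + c2 *s y" "w2 \<in> U0'" unfolding U'_def by blast
          have z1: "\<omega>1 w1 w2 = 0" using U0s(9) pq unfolding iso_def by blast
          have z2: "\<omega>1 w1 x0 = 0" "\<omega>1 x0 w2 = 0" "\<omega>1 x0 x0 = 0" "\<omega>1 x0 y = 0" "\<omega>1 y x0 = 0"
            using x01 wW pq x0W y(1) by auto
          have z3: "\<omega>1 w1 y = 0" using y(2) pq by blast
          have "\<omega>1 y w2 = - \<omega>1 w2 y" by (rule sk_swap[OF s1])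
          then have z4: "\<omega>1 y w2 = 0" using y(2) pq by simp
          show "\<omega>1 p q = 0" unfolding pq(1,3) expand9[OF s1]
            by (simp add: sk_scale1[OF s1] sk_scale2[OF s1] z1 z2 z3 z4 sk_self[OF s1])
        qed
        show "iso \<omega>2 U'"
          unfolding iso_def
        proof (intro ballI)
          fix p q assume "p \<in> U'" "q \<in> U'"
          then obtain w1 c1 w2 c2 where pq: "p = w1 + g w1 *s x0 + c1 *s y" "w1 \<in> U0'"
            "q = w2 + g w2 *s x0 + c2 *s y" "w2 \<in> U0'" unfolding U'_def by blast
          have z1: "\<omega>2 w1 w2 = 0" using U0s(10) pq unfolding iso_def by blast
          have z2: "\<omega>2 x0 w2 = 0" "\<omega>2 x0 w1 = 0" using wH pq unfolding H_def by auto
          have "\<omega>2 w1 x0 = - \<omega>2 x0 w1" by (rule sk_swap[OF s2])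
          then have z3: "\<omega>2 w1 x0 = 0" using z2 by simp
          have z5: "\<omega>2 w1 y = - \<omega>2 y w1" by (rule sk_swap[OF s2])
          have e1: "\<omega>2 y w2 + g w2 * \<omega>2 y x0 = 0" unfolding g_def using yx0nz by (simp add: field_simps)
          have e2: "\<omega>2 w1 y + g w1 * \<omega>2 x0 y = 0" unfolding g_def using yx0nz yx0 z5 by (simp add: field_simps)
          have "\<omega>2 p q = c2 * (\<omega>2 w1 y + g w1 * \<omega>2 x0 y) + c1 * (\<omega>2 y w2 + g w2 * \<omega>2 y x0)"
            unfolding pq(1,3) expand9[OF s2]
            by (simp add: sk_scale1[OF s2] sk_scale2[OF s2] z1 z2 z3 sk_self[OF s2] algebra_simps)
          then show "\<omega>2 p q = 0" using e1 e2 by simp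
        qed
      qed
      then show ?thesis using radW by blast
    qed
  qed
qed

end

context fcvs
begin

lemma splits_mono:
  assumes sp: "splits W U U' \<sigma> \<tau>"
    and h1: "\<And>X. iso \<sigma> X \<Longrightarrow> iso \<tau> X \<Longrightarrow> iso \<omega>1 X"
    and h2: "\<And>X. iso \<sigma> X \<Longrightarrow> iso \<tau> X \<Longrightarrow> iso \<omega>2 X"
  shows "splits W U U' \<omega>1 \<omega>2"
proof -
  note u = sp[unfolded splits_def]
  have a: "subspace U" "subspace U'" "U \<subseteq> W" "U' \<subseteq> W" "U \<inter> U' = {0}"
    "\<forall>w\<in>W. \<exists>u\<in>U. \<exists>u'\<in>U'. w = u + u'" "iso \<sigma> U" "iso \<tau> U" "iso \<sigma> U'" "iso \<tau> U'"
    using u apply -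
    apply (elim conjE, assumption)+
    done
  have b: "iso \<omega>1 U" "iso \<omega>2 U" "iso \<omega>1 U'" "iso \<omega>2 U'" using a(7-10) h1 h2 by auto
  show ?thesis unfolding splits_def
    apply (intro conjI)
    apply (fact a(1)) apply (fact a(2)) apply (fact a(3)) apply (fact a(4)) apply (fact a(5)) apply (fact a(6))
    apply (fact b(1)) apply (fact b(2)) apply (fact b(3)) apply (fact b(4))
    done
qed

lemma splits_triv:
  assumes "subspace W" "iso \<omega>1 W" "iso \<omega>2 W" "skew \<omega>1" "skew \<omega>2"
  shows "splits W W {0} \<omega>1 \<omega>2"
proof -
  have a: "iso \<omega>1 {0}" "iso \<omega>2 {0}" unfolding iso_def using assms(4,5) by (simp_all add: sk_zero1)
  have b: "\<forall>w\<in>W. \<exists>u\<in>W. \<exists>u'\<in>{0}. w = u + u'" by simp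
  have c: "W \<inter> {0} = {0}" using assms(1) subspace_0 by blast
  show ?thesis unfolding splits_def
    apply (intro conjI)
    apply (fact assms(1)) apply (simp) apply simp apply (use assms(1) subspace_0 in blast)
    apply (fact c) apply (fact b) apply (fact assms(2)) apply (fact assms(3)) apply (fact a(1)) apply (fact a(2))
    done
qed

lemma pencil_split:
  assumes s1: "skew \<omega>1" and s2: "skew \<omega>2" and W: "subspace W"
  shows "\<exists>U U'. splits W U U' \<omega>1 \<omega>2"
proof -
  define f where "f p = dim (rad W (pen (fst p) (snd p) \<omega>1 \<omega>2))" for p
  define m where "m = (LEAST k. \<exists>p. f p = k)"
  have "\<exists>p. f p = m" unfolding m_def by (rule LeastI_ex) blast
  then obtain a0 b0 where ab0: "f (a0, b0) = m" by auto
  have mmin: "m \<le> f p" for p unfolding m_def by (rule Least_le) blast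
  show ?thesis
  proof (cases "a0 = 0")
    case False
    define \<sigma> where "\<sigma> = pen a0 b0 \<omega>1 \<omega>2"
    have ss: "skew \<sigma>" unfolding \<sigma>_def by (rule skew_pen[OF s1 s2])
    have "good W \<sigma> \<omega>2"
      unfolding good_def
    proof (intro allI)
      fix a b
      have "pen a b \<sigma> \<omega>2 = pen (a * a0) (a * b0 + b) \<omega>1 \<omega>2"
        unfolding \<sigma>_def pen_def by (simp add: fun_eq_iff algebra_simps)
      then show "dim (rad W \<sigma>) \<le> dim (rad W (pen a b \<sigma> \<omega>2))"
        using mmin[of "(a * a0, a * b0 + b)"] ab0 unfolding f_def \<sigma>_def by simp
    qed
    then obtain U U' where UU: "splits W U U' \<sigma> \<omega>2" "rad W \<sigma> \<subseteq> U"
      using main_split[OF ss s2 W] by blast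
    have conv: "iso \<omega>1 X" if "iso \<sigma> X" "iso \<omega>2 X" for X
      unfolding iso_def
    proof (intro ballI)
      fix x y assume "x \<in> X" "y \<in> X"
      then have "a0 * \<omega>1 x y + b0 * \<omega>2 x y = 0" "\<omega>2 x y = 0"
        using that unfolding iso_def \<sigma>_def pen_def by auto
      then show "\<omega>1 x y = 0" using False by simp
    qed
    have "splits W U U' \<omega>1 \<omega>2" by (rule splits_mono[OF UU(1)]) (use conv in auto)
    then show ?thesis by blast
  next
    case True
    note a00 = True
    show ?thesis
    proof (cases "b0 = 0")
      case True
      then have mW: "m = dim W" using ab0 a00 unfolding f_def by (simp add: rad_pen_00)
      have "rad W \<omega>1 = W"
      proof (rule subspace_dim_equal)
        show "subspace (rad W \<omega>1)" by (rule rad_subspace[OF W s1])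
        show "subspace W" by (fact W)
        show "rad W \<omega>1 \<subseteq> W" by (rule rad_sub)
        show "dim W \<le> dim (rad W \<omega>1)" using mmin[of "(1, 0)"] mW pen_10[of \<omega>1 \<omega>2] unfolding f_def by simp
      qed
      moreover have "rad W \<omega>2 = W"
      proof (rule subspace_dim_equal)
        show "subspace (rad W \<omega>2)" by (rule rad_subspace[OF W s2])
        show "subspace W" by (fact W)
        show "rad W \<omega>2 \<subseteq> W" by (rule rad_sub)
        have "pen 0 1 \<omega>1 \<omega>2 = \<omega>2" unfolding pen_def by simp
        then show "dim W \<le> dim (rad W \<omega>2)" using mmin[of "(0, 1)"] mW unfolding f_def by simp
      qed
      ultimately have "iso \<omega>1 W" "iso \<omega>2 W" unfolding iso_def rad_def by blast+
      then have "splits W W {0} \<omega>1 \<omega>2" using splits_triv W s1 s2 by blast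
      then show ?thesis by blast
    next
      case False
      define \<sigma> where "\<sigma> = pen 0 b0 \<omega>1 \<omega>2"
      have ss: "skew \<sigma>" unfolding \<sigma>_def by (rule skew_pen[OF s1 s2])
      have "good W \<sigma> \<omega>1"
        unfolding good_def
      proof (intro allI)
        fix a b
        have "pen a b \<sigma> \<omega>1 = pen b (a * b0) \<omega>1 \<omega>2"
          unfolding \<sigma>_def pen_def by (simp add: fun_eq_iff algebra_simps)
        then show "dim (rad W \<sigma>) \<le> dim (rad W (pen a b \<sigma> \<omega>1))"
          using mmin[of "(b, a * b0)"] ab0 a00 unfolding f_def \<sigma>_def by simp
      qed
      then obtain U U' where UU: "splits W U U' \<sigma> \<omega>1" "rad W \<sigma> \<subseteq> U"
        using main_split[OF ss s1 W] by blast
      have conv: "iso \<omega>2 X" if "iso \<sigma> X" for X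
        unfolding iso_def
      proof (intro ballI)
        fix x y assume "x \<in> X" "y \<in> X"
        then have "b0 * \<omega>2 x y = 0" using that unfolding iso_def \<sigma>_def pen_def by auto
        then show "\<omega>2 x y = 0" using False by simp
      qed
      have "splits W U U' \<omega>1 \<omega>2" by (rule splits_mono[OF UU(1)]) (use conv in auto)
      then show ?thesis by blast
    qed
  qed
qed

end

locale liec = fcvs scale Basis
  for scale :: "complex \<Rightarrow> 'a::ab_group_add \<Rightarrow> 'a" (infixr \<open>*s\<close> 75) and Basis +
  fixes br :: "'a \<Rightarrow> 'a \<Rightarrow> 'a"
  assumes bl1: "\<And>x. Vector_Spaces.linear scale scale (br x)"
    and bl2: "\<And>y. Vector_Spaces.linear scale scale (\<lambda>x. br x y)"
    and alt: "\<And>x. br x x = 0"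
    and nil: "\<And>x y z. br x (br y z) = 0"
    and nz: "\<exists>x y. br x y \<noteq> 0"
    and dim2: "dim (span {br x y |x y. True}) \<le> 2"
begin

lemma br_add2: "br x (y + z) = br x y + br x z"
  using bl1[of x] unfolding Vector_Spaces.linear_iff by blast
lemma br_sc2: "br x (c *s y) = c *s br x y"
  using bl1[of x] unfolding Vector_Spaces.linear_iff by blast
lemma br_add1: "br (x + y) z = br x z + br y z"
  using bl2[of z] unfolding Vector_Spaces.linear_iff by blast
lemma br_sc1: "br (c *s x) y = c *s br x y"
  using bl2[of y] unfolding Vector_Spaces.linear_iff by blast
lemma br_zero1[simp]: "br 0 y = 0" using br_sc1[of 0 0 y] by simp
lemma br_zero2[simp]: "br y 0 = 0" using br_sc2[of y 0 0] by simp
lemma br_anti: "br y x = - br x y"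
proof -
  have "br (x + y) (x + y) = br x x + br y x + (br x y + br y y)" by (simp only: br_add1 br_add2)
  then have "br y x + br x y = 0" by (simp add: alt)
  then have "br x y + br y x = 0" by (simp add: add.commute)
  then show ?thesis by (metis add.commute add_eq_0_iff2)
qed
lemma br_neg1: "br (- x) y = - br x y" using br_sc1[of "-1" x y] by simp
lemma br_diff1: "br (x - y) z = br x z - br y z"
  by (metis br_add1 diff_add_cancel eq_diff_eq)

abbreviation "nn \<equiv> span {br x y |x y. True}"

lemma br_in: "br x y \<in> nn" by (intro span_base) blast

lemma central2: "z \<in> nn \<Longrightarrow> br x z = 0"
proof (induction rule: span_induct)
  case base
  show ?case unfolding subspace_def by (simp add: br_add2 br_sc2)
next
  case (step z) then show ?case using nil by blast
qed

lemma central1: "z \<in> nn \<Longrightarrow> br z x = 0"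
  using central2[of z x] br_anti[of z x] by simp

lemma br3: "br (p1 + p2 + p3) (q1 + q2 + q3) = br p1 q1 + br p1 q2 + br p1 q3 + br p2 q1 + br p2 q2 + br p2 q3 + br p3 q1 + br p3 q2 + br p3 q3"
  by (simp add: br_add1 br_add2 algebra_simps)

lemma coords:
  obtains \<omega>1 \<omega>2 where "skew \<omega>1" "skew \<omega>2" "\<And>x y. \<omega>1 x y = 0 \<Longrightarrow> \<omega>2 x y = 0 \<Longrightarrow> br x y = 0"
proof -
  obtain Bn where Bn: "Bn \<subseteq> nn" "independent Bn" "nn \<subseteq> span Bn" "card Bn = dim nn"
    using basis_exists by blast
  have finB: "finite Bn" using Bn(2) finiteI_independent by blast
  have spB: "span Bn = nn" by (rule span_subspace[OF Bn(1) Bn(3)]) simp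
  have "Bn \<noteq> {}"
  proof
    assume "Bn = {}"
    then have "nn = {0}" using spB by simp
    moreover obtain x y where "br x y \<noteq> 0" using nz by blast
    ultimately show False using br_in[of x y] by simp
  qed
  then have "card Bn \<noteq> 0" using finB by simp
  then have c12: "card Bn = 1 \<or> card Bn = 2" using Bn(4) dim2 by linarith
  have "\<exists>z1 z2. Bn \<subseteq> {z1, z2}"
  proof (cases "card Bn = 1")
    case True
    then obtain z where "Bn = {z}" by (rule card_1_singletonE)
    then show ?thesis by blast
  next
    case False
    then have "card Bn = 2" using c12 by simp
    then have "\<exists>p q. Bn = {p, q} \<and> p \<noteq> q" by (simp only: card_2_iff)
    then show ?thesis by blast
  qed
  then obtain z1 z2 where zz: "Bn \<subseteq> {z1, z2}" by blast
  define \<omega>1 where "\<omega>1 x y = representation Bn (br x y) z1" for x y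
  define \<omega>2 where "\<omega>2 x y = representation Bn (br x y) z2" for x y
  have inB: "br x y \<in> span Bn" for x y using br_in spB by blast
  have sk: "skew (\<lambda>x y. representation Bn (br x y) z)" for z
    unfolding skew_def
  proof (intro conjI allI)
    fix x y w c
    show "representation Bn (br (x + y) w) z = representation Bn (br x w) z + representation Bn (br y w) z"
      using representation_add[OF Bn(2) inB inB] by (simp add: br_add1)
    show "representation Bn (br (c *s x) y) z = c * representation Bn (br x y) z"
      using representation_scale[OF Bn(2) inB] by (simp add: br_sc1)
    show "representation Bn (br y x) z = - representation Bn (br x y) z"
      using representation_neg[OF Bn(2) inB] by (simp add: br_anti[of y x])
  qed
  have key: "br x y = 0" if "\<omega>1 x y = 0" "\<omega>2 x y = 0" for x y
  proof -
    have "br x y = (\<Sum>b\<in>Bn. representation Bn (br x y) b *s b)"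
      using sum_representation_eq[OF Bn(2) inB finB order_refl] by simp
    also have "\<dots> = 0"
    proof (rule sum.neutral, rule ballI)
      fix b assume "b \<in> Bn"
      then have "b = z1 \<or> b = z2" using zz by blast
      then show "representation Bn (br x y) b *s b = 0" using that unfolding \<omega>1_def \<omega>2_def by auto
    qed
    finally show ?thesis .
  qed
  have "skew \<omega>1" unfolding \<omega>1_def using sk[of z1] .
  moreover have "skew \<omega>2" unfolding \<omega>2_def using sk[of z2] .
  ultimately show ?thesis using that[of \<omega>1 \<omega>2] key by blast
qed

end

context liec
begin

lemma vs: "vector_space scale" by unfold_locales

lemma exists_periodic: "\<exists>D. lie_derivation scale br D \<and> (\<exists>m\<ge>1. D ^^ m = id)"
proof -
  obtain \<omega>1 \<omega>2 where s1: "skew \<omega>1" and s2: "skew \<omega>2"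
    and key: "\<And>x y. \<omega>1 x y = 0 \<Longrightarrow> \<omega>2 x y = 0 \<Longrightarrow> br x y = 0"
    using coords by metis
  obtain V where V: "subspace V" "V \<subseteq> UNIV" "nn \<inter> V = {0}" "\<forall>w\<in>UNIV. \<exists>a\<in>nn. \<exists>m\<in>V. w = a + m"
    by (rule complement_exists[OF subspace_span subspace_UNIV subset_UNIV])
  from pencil_split[OF s1 s2 V(1)] obtain U U' where UU: "splits V U U' \<omega>1 \<omega>2" by (elim exE)
  note UUu = UU[unfolded splits_def]
  have Us: "subspace U" "subspace U'" "U \<subseteq> V" "U' \<subseteq> V" "U \<inter> U' = {0}"
    "\<forall>w\<in>V. \<exists>u\<in>U. \<exists>u'\<in>U'. w = u + u'" "iso \<omega>1 U" "iso \<omega>2 U" "iso \<omega>1 U'" "iso \<omega>2 U'"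
    using UUu apply -
    apply (elim conjE, assumption)+
    done
  have bU: "br u1 u2 = 0" if "u1 \<in> U" "u2 \<in> U" for u1 u2
  proof (rule key)
    show "\<omega>1 u1 u2 = 0" using Us(7) that unfolding iso_def by blast
    show "\<omega>2 u1 u2 = 0" using Us(8) that unfolding iso_def by blast
  qed
  have bU': "br u1 u2 = 0" if "u1 \<in> U'" "u2 \<in> U'" for u1 u2
  proof (rule key)
    show "\<omega>1 u1 u2 = 0" using Us(9) that unfolding iso_def by blast
    show "\<omega>2 u1 u2 = 0" using Us(10) that unfolding iso_def by blast
  qed
  have dec: "\<exists>u\<in>U. \<exists>v\<in>U'. \<exists>z\<in>nn. x = u + v + z" for x
  proof -
    obtain a m where am: "a \<in> nn" "m \<in> V" "x = a + m" using V(4) by blast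
    obtain u v where uv: "u \<in> U" "v \<in> U'" "m = u + v" using Us(6) am(2) by blast
    have "x = u + v + a" using am(3) uv(3) by (simp add: algebra_simps)
    then show ?thesis using uv am by blast
  qed
  have uniq: "u1 = u2 \<and> v1 = v2 \<and> z1 = z2"
    if h: "u1 \<in> U" "v1 \<in> U'" "z1 \<in> nn" "u2 \<in> U" "v2 \<in> U'" "z2 \<in> nn" "u1 + v1 + z1 = u2 + v2 + z2"
    for u1 v1 z1 u2 v2 z2
  proof -
    have e: "(u1 - u2) + (v1 - v2) = z2 - z1" using h(7) by (simp add: algebra_simps)
    have "u1 - u2 \<in> U" using h(1,4) Us(1) subspace_diff by blast
    then have a1: "u1 - u2 \<in> V" using Us(3) by blast
    have "v1 - v2 \<in> U'" using h(2,5) Us(2) subspace_diff by blast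
    then have a2: "v1 - v2 \<in> V" using Us(4) by blast
    have "(u1 - u2) + (v1 - v2) \<in> V" using V(1) a1 a2 subspace_add by blast
    moreover have "z2 - z1 \<in> nn" using h(3,6) span_diff by blast
    ultimately have "z2 - z1 \<in> nn \<inter> V" using e by simp
    then have z: "z2 - z1 = 0" using V(3) by blast
    then have "u1 - u2 = v2 - v1" using e by (simp add: algebra_simps)
    moreover have "u1 - u2 \<in> U" using h(1,4) Us(1) subspace_diff by blast
    moreover have "v2 - v1 \<in> U'" using h(2,5) Us(2) subspace_diff by blast
    ultimately have "u1 - u2 \<in> U \<inter> U'" by (metis IntI)
    then have "u1 - u2 = 0" using Us(5) by blast
    then show ?thesis using e z by simp
  qed
  define a :: complex where "a = Complex (1/2) (sqrt 3 / 2)"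
  define b :: complex where "b = Complex (1/2) (- sqrt 3 / 2)"
  have ab: "a + b = 1" unfolding a_def b_def by (simp add: complex_eq_iff)
  have a3: "a ^ 3 = -1" unfolding a_def by (simp add: power3_eq_cube complex_eq_iff algebra_simps)
  have b3: "b ^ 3 = -1" unfolding b_def by (simp add: power3_eq_cube complex_eq_iff algebra_simps)
  have a6: "a ^ 6 = 1" using a3 power_mult[of a 3 2] by simp
  have b6: "b ^ 6 = 1" using b3 power_mult[of b 3 2] by simp
  define P where "P x t \<longleftrightarrow> fst t \<in> U \<and> fst (snd t) \<in> U' \<and> snd (snd t) \<in> nn \<and> x = fst t + fst (snd t) + snd (snd t)" for x t
  define D where "D x = (let t = SOME t. P x t in a *s fst t + b *s fst (snd t) + snd (snd t))" for x
  have Dchar: "D (u + v + z) = a *s u + b *s v + z" if h: "u \<in> U" "v \<in> U'" "z \<in> nn" for u v z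
  proof -
    have "P (u + v + z) (u, v, z)" unfolding P_def using h by simp
    then have "P (u + v + z) (SOME t. P (u + v + z) t)" by (rule someI)
    then obtain t where t: "t = (SOME t. P (u + v + z) t)" "P (u + v + z) t" by blast
    then have tt: "fst t \<in> U" "fst (snd t) \<in> U'" "snd (snd t) \<in> nn"
       "u + v + z = fst t + fst (snd t) + snd (snd t)" unfolding P_def by auto
    have "u = fst t \<and> v = fst (snd t) \<and> z = snd (snd t)"
      by (rule uniq[OF h tt(1) tt(2) tt(3) tt(4)])
    then have "t = (u, v, z)" by (simp add: prod_eq_iff)
    then have "(SOME t. P (u + v + z) t) = (u, v, z)" using t(1) by simp
    then show ?thesis unfolding D_def by simp
  qed
  have Dadd: "D (x + y) = D x + D y" for x y
  proof -
    obtain u1 v1 z1 where 1: "u1 \<in> U" "v1 \<in> U'" "z1 \<in> nn" "x = u1 + v1 + z1" using dec by blast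
    obtain u2 v2 z2 where 2: "u2 \<in> U" "v2 \<in> U'" "z2 \<in> nn" "y = u2 + v2 + z2" using dec by blast
    have "x + y = (u1 + u2) + (v1 + v2) + (z1 + z2)" using 1 2 by (simp add: algebra_simps)
    moreover have "u1 + u2 \<in> U" "v1 + v2 \<in> U'" "z1 + z2 \<in> nn"
      using 1 2 Us(1,2) subspace_add span_add by blast+
    ultimately have "D (x + y) = a *s (u1 + u2) + b *s (v1 + v2) + (z1 + z2)" using Dchar by simp
    also have "\<dots> = D x + D y" using Dchar 1 2 by (simp add: algebra_simps)
    finally show ?thesis .
  qed
  have Dsc: "D (c *s x) = c *s D x" for c x
  proof -
    obtain u1 v1 z1 where 1: "u1 \<in> U" "v1 \<in> U'" "z1 \<in> nn" "x = u1 + v1 + z1" using dec by blast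
    have "c *s x = (c *s u1) + (c *s v1) + (c *s z1)" using 1 by (simp add: algebra_simps)
    moreover have "c *s u1 \<in> U" "c *s v1 \<in> U'" "c *s z1 \<in> nn"
      using 1 Us(1,2) subspace_scale span_scale by blast+
    ultimately have "D (c *s x) = a *s (c *s u1) + b *s (c *s v1) + (c *s z1)" using Dchar by simp
    also have "\<dots> = c *s D x" using Dchar 1 by (simp add: algebra_simps)
    finally show ?thesis .
  qed
  have Dpow: "(D ^^ k) (u + v + z) = (a ^ k) *s u + (b ^ k) *s v + z" if h: "u \<in> U" "v \<in> U'" "z \<in> nn" for k u v z
  proof (induction k)
    case 0 then show ?case by simp
  next
    case (Suc k)
    have "(D ^^ Suc k) (u + v + z) = D ((a ^ k) *s u + (b ^ k) *s v + z)" using Suc by simp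
    also have "\<dots> = a *s ((a ^ k) *s u) + b *s ((b ^ k) *s v) + z"
    proof (rule Dchar)
      show "(a ^ k) *s u \<in> U" using h(1) Us(1) subspace_scale by blast
      show "(b ^ k) *s v \<in> U'" using h(2) Us(2) subspace_scale by blast
      show "z \<in> nn" by (fact h(3))
    qed
    also have "\<dots> = (a ^ Suc k) *s u + (b ^ Suc k) *s v + z" by simp
    finally show ?case .
  qed
  have D6: "D ^^ 6 = id"
  proof
    fix x
    obtain u v z where 1: "u \<in> U" "v \<in> U'" "z \<in> nn" "x = u + v + z" using dec by blast
    show "(D ^^ 6) x = id x" using Dpow[OF 1(1-3), of 6] a6 b6 1(4) by simp
  qed
  have Dder: "D (br x y) = br (D x) y + br x (D y)" for x y
  proof -
    obtain u1 v1 z1 where 1: "u1 \<in> U" "v1 \<in> U'" "z1 \<in> nn" "x = u1 + v1 + z1" using dec by blast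
    obtain u2 v2 z2 where 2: "u2 \<in> U" "v2 \<in> U'" "z2 \<in> nn" "y = u2 + v2 + z2" using dec by blast
    have z0: "0 \<in> U" "0 \<in> U'" using Us(1,2) subspace_0 by auto
    have "D (0 + 0 + br x y) = a *s 0 + b *s 0 + br x y" by (rule Dchar[OF z0 br_in])
    then have lhs: "D (br x y) = br x y" by simp
    have c1: "br u1 u2 = 0" "br v1 v2 = 0" by (rule bU[OF 1(1) 2(1)], rule bU'[OF 1(2) 2(2)])
    have c2: "br p z2 = 0" "br z1 p = 0" for p by (rule central2[OF 2(3)], rule central1[OF 1(3)])
    have Dx: "D x = a *s u1 + b *s v1 + z1" unfolding 1(4) by (rule Dchar[OF 1(1-3)])
    have Dy: "D y = a *s u2 + b *s v2 + z2" unfolding 2(4) by (rule Dchar[OF 2(1-3)])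
    have e0: "br x y = br u1 v2 + br v1 u2"
      unfolding 1(4) 2(4) br3 by (simp add: c1 c2)
    have e1: "br (D x) y = a *s br u1 v2 + b *s br v1 u2"
      unfolding Dx 2(4) br3 by (simp add: c1 c2 br_sc1)
    have e2: "br x (D y) = b *s br u1 v2 + a *s br v1 u2"
      unfolding Dy 1(4) br3 by (simp add: c1 c2 br_sc2)
    have s1': "a *s br u1 v2 + b *s br u1 v2 = br u1 v2"
      using scale_left_distrib[of a b "br u1 v2"] ab by simp
    have s2': "b *s br v1 u2 + a *s br v1 u2 = br v1 u2"
      using scale_left_distrib[of b a "br v1 u2"] ab by (simp add: add.commute)
    have "br (D x) y + br x (D y) = (a *s br u1 v2 + b *s br u1 v2) + (b *s br v1 u2 + a *s br v1 u2)"
      unfolding e1 e2 by (simp only: add.assoc add.left_commute)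
    also have "\<dots> = br x y" unfolding s1' s2' e0 ..
    finally show ?thesis using lhs by simp
  qed
  have "lie_derivation scale br D"
    unfolding lie_derivation_def Vector_Spaces.linear_iff using vs Dadd Dsc Dder by blast
  moreover have "\<exists>m\<ge>1. D ^^ m = id" using D6 by (intro exI[of _ 6]) simp
  ultimately show ?thesis by blast
qed

end

theorem proposition4p7:
  fixes sc :: "complex \<Rightarrow> 'a::ab_group_add \<Rightarrow> 'a"
    and br :: "'a \<Rightarrow> 'a \<Rightarrow> 'a"
  assumes "lie_algebra sc br"
    and "finite_dim_space sc"
    and "two_step_nilpotent br"
    and "vector_space.dim sc (derived_algebra sc br) \<le> 2"
  shows "\<exists>D. periodic_derivation sc br D"
proof -
  have vs: "vector_space sc" using assms(1) unfolding lie_algebra_def by blast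
  interpret V: vector_space sc by (rule vs)
  obtain B where B: "finite B" "V.span B = UNIV" using assms(2) unfolding finite_dim_space_def by blast
  obtain B0 where B0: "B0 \<subseteq> B" "V.independent B0" "B \<subseteq> V.span B0"
    by (rule V.maximal_independent_subset)
  have fin0: "finite B0" using B(1) B0(1) finite_subset by blast
  have sp0: "V.span B0 = UNIV"
  proof -
    have "V.span B \<subseteq> V.span B0" using B0(3) V.span_minimal V.subspace_span by blast
    then show ?thesis using B(2) by blast
  qed
  have la: "(\<forall>x. Vector_Spaces.linear sc sc (br x)) \<and> (\<forall>y. Vector_Spaces.linear sc sc (\<lambda>x. br x y)) \<and>
     (\<forall>x. br x x = 0)" using assms(1) unfolding lie_algebra_def by blast
  have tn: "(\<forall>x y z. br x (br y z) = 0) \<and> (\<exists>x y. br x y \<noteq> 0)"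
    using assms(3) unfolding two_step_nilpotent_def by blast
  interpret L: liec sc B0 br
  proof unfold_locales
    show "finite B0" by (fact fin0)
    show "V.independent B0" by (fact B0(2))
    show "V.span B0 = UNIV" by (fact sp0)
    show "\<And>x b1 b2. br x (b1 + b2) = br x b1 + br x b2"
      using la unfolding Vector_Spaces.linear_iff by blast
    show "\<And>x r b. br x (sc r b) = sc r (br x b)"
      using la unfolding Vector_Spaces.linear_iff by blast
    show "\<And>y b1 b2. br (b1 + b2) y = br b1 y + br b2 y"
      using la unfolding Vector_Spaces.linear_iff by blast
    show "\<And>y r b. br (sc r b) y = sc r (br b y)"
      using la unfolding Vector_Spaces.linear_iff by blast
    show "\<And>x. br x x = 0" using la by blast
    show "\<And>x y z. br x (br y z) = 0" using tn by blast
    show "\<exists>x y. br x y \<noteq> 0" using tn by blast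
    show "V.dim (V.span {br x y |x y. True}) \<le> 2" using assms(4) unfolding derived_algebra_def .
  qed
  have "\<exists>D. lie_derivation sc br D \<and> (\<exists>m\<ge>1. D ^^ m = id)" by (rule L.exists_periodic)
  then show ?thesis unfolding periodic_derivation_def by blast
qed


end
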